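(* Let $d\ge 1$, let $1<s<2^d$ with $s=j\cdot 2^k$, $j$ odd, $k\ge 0$. For $t\ge 0$ set $\lambda_t=\lambda^*(d+t,2^t s)$ and $c_t=\frac12-\frac{2^{d-k}-1}{2^{d+t+1}-1}$. Then for every $t\ge 0$, $\lambda_t\le \frac12+c_t\lambda_{t+1}$. More precisely, for every $n\ge d+t+1$ and every $A\subseteq\mathbb{F}_2^n$, \[\lambda^*(n,d+t,2^t s,A)\le \frac12+c_t\,\lambda^*(n,d+t+1,2^{t+1}s,A).\]
   Context: For integers $n\ge d\ge 1$, a $d$-flat in $\mathbb{F}_2^n$ is a set $x_0+U$ with $x_0\in\mathbb{F}_2^n$ and $U$ a $d$-dimensional linear subspace of $\mathbb{F}_2^n$. For $A\subseteq\mathbb{F}_2^n$ and an integer $0\le s\le 2^d$, $\lambda^*(n,d,s,A)$ denotes the fraction of $d$-flats $Q$ in $\mathbb{F}_2^n$ with $|Q\cap A|=s$. Let $\lambda^*(n,d,s)=\max_{A}\lambda^*(n,d,s,A)$ and $\lambda^*(d,s)=\lim_{n\to\infty}\lambda^*(n,d,s)$. *)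

theory Defs
  imports Complex_Main
begin

text \<open>Vectors of F_2^n are represented as functions nat => bool vanishing from index n on;
  addition is coordinatewise exclusive or.\<close>

definition F2n :: "nat \<Rightarrow> (nat \<Rightarrow> bool) set" where
  "F2n n = {v. \<forall>i\<ge>n. \<not> v i}"

definition vadd :: "(nat \<Rightarrow> bool) \<Rightarrow> (nat \<Rightarrow> bool) \<Rightarrow> (nat \<Rightarrow> bool)" where
  "vadd v w = (\<lambda>i. v i \<noteq> w i)"

text \<open>F_2-linear combinations of a finite set of vectors (coefficients in F_2 = choice of a subset).\<close>
definition vsum :: "(nat \<Rightarrow> bool) set \<Rightarrow> (nat \<Rightarrow> bool)" where
  "vsum S = (\<lambda>i. odd (card {v\<in>S. v i}))"

definition span2 :: "(nat \<Rightarrow> bool) set \<Rightarrow> (nat \<Rightarrow> bool) set" where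
  "span2 B = vsum ` Pow B"

definition lin_indep2 :: "(nat \<Rightarrow> bool) set \<Rightarrow> bool" where
  "lin_indep2 B \<longleftrightarrow> finite B \<and> inj_on vsum (Pow B)"

definition subspace_dim :: "nat \<Rightarrow> nat \<Rightarrow> (nat \<Rightarrow> bool) set \<Rightarrow> bool" where
  "subspace_dim n d U \<longleftrightarrow>
     (\<exists>B. B \<subseteq> F2n n \<and> lin_indep2 B \<and> card B = d \<and> U = span2 B)"

definition flats :: "nat \<Rightarrow> nat \<Rightarrow> (nat \<Rightarrow> bool) set set" where
  "flats n d = {Q. \<exists>x0 U. x0 \<in> F2n n \<and> subspace_dim n d U \<and> Q = vadd x0 ` U}"

definition lam :: "nat \<Rightarrow> nat \<Rightarrow> nat \<Rightarrow> (nat \<Rightarrow> bool) set \<Rightarrow> real" where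
  "lam n d s A = real (card {Q \<in> flats n d. card (Q \<inter> A) = s}) / real (card (flats n d))"

definition lamN :: "nat \<Rightarrow> nat \<Rightarrow> nat \<Rightarrow> real" where
  "lamN n d s = Max ((\<lambda>A. lam n d s A) ` Pow (F2n n))"

definition lamstar :: "nat \<Rightarrow> nat \<Rightarrow> real" where
  "lamstar d s = lim (\<lambda>n. lamN n d s)"

end

theory Submission
  imports Defs
begin

definition zv :: "nat \<Rightarrow> bool" where "zv = (\<lambda>_. False)"

lemma vadd_comm: "vadd x y = vadd y x" by (auto simp: vadd_def)
lemma vadd_assoc: "vadd (vadd x y) z = vadd x (vadd y z)" by (auto simp: vadd_def)
lemma vadd_self[simp]: "vadd x x = zv" by (auto simp: vadd_def zv_def)
lemma vadd_zv[simp]: "vadd zv x = x" "vadd x zv = x" by (auto simp: vadd_def zv_def)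
lemma vadd_cancel[simp]: "vadd x (vadd x y) = y" by (auto simp: vadd_def)
lemma vadd_cancel2[simp]: "vadd (vadd y x) x = y" by (auto simp: vadd_def)
lemma vadd_left_inj[simp]: "vadd x y = vadd x z \<longleftrightarrow> y = z" by (auto simp: vadd_def fun_eq_iff)
lemma vadd_right_inj[simp]: "vadd y x = vadd z x \<longleftrightarrow> y = z" by (auto simp: vadd_def fun_eq_iff)

lemma F2n_vadd: "x \<in> F2n n \<Longrightarrow> y \<in> F2n n \<Longrightarrow> vadd x y \<in> F2n n"
  by (auto simp: F2n_def vadd_def)
lemma zv_F2n[simp]: "zv \<in> F2n n" by (auto simp: F2n_def zv_def)

lemma F2n_image: "F2n n = (\<lambda>c i. i \<in> c) ` Pow {..<n}"
proof
  show "(\<lambda>c i. i \<in> c) ` Pow {..<n} \<subseteq> F2n n" by (auto simp: F2n_def)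
  show "F2n n \<subseteq> (\<lambda>c i. i \<in> c) ` Pow {..<n}"
  proof
    fix x assume "x \<in> F2n n"
    then have "x = (\<lambda>i. i \<in> {i. x i})" "{i. x i} \<in> Pow {..<n}"
      by (auto simp: F2n_def not_le[symmetric])
    then show "x \<in> (\<lambda>c i. i \<in> c) ` Pow {..<n}" by blast
  qed
qed

lemma finite_F2n[simp]: "finite (F2n n)"
  unfolding F2n_image by simp

lemma card_F2n: "card (F2n n) = 2 ^ n"
proof -
  have "inj_on (\<lambda>c i. i \<in> c) (Pow {..<n})"
    by (auto simp: inj_on_def fun_eq_iff)
  then show ?thesis unfolding F2n_image by (simp add: card_image card_Pow)
qed

definition lc :: "(nat \<Rightarrow> nat \<Rightarrow> bool) \<Rightarrow> nat set \<Rightarrow> nat \<Rightarrow> bool" where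
  "lc v c = (\<lambda>k. odd (card {i\<in>c. v i k}))"

lemma lc_empty[simp]: "lc v {} = zv" by (simp add: lc_def zv_def)

lemma lc_insert: assumes "finite c" "i \<notin> c"
  shows "lc v (insert i c) = vadd (v i) (lc v c)"
proof -
  { fix k
    have "{j\<in>insert i c. v j k} = (if v i k then insert i {j\<in>c. v j k} else {j\<in>c. v j k})"
      by auto
    then have "odd (card {j\<in>insert i c. v j k}) = (v i k \<noteq> odd (card {j\<in>c. v j k}))"
      using assms by auto }
  then show ?thesis by (simp add: lc_def vadd_def)
qed

lemma lc_single[simp]: "lc v {i} = v i"
  using lc_insert[of "{}" i v] by simp

lemma card_sd_parity:
  assumes "finite X" "finite Y"
  shows "odd (card ((X - Y) \<union> (Y - X))) = (odd (card X) \<noteq> odd (card Y))"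
proof -
  have e: "(X - Y) \<union> (Y - X) = (X \<union> Y) - (X \<inter> Y)" by blast
  have a: "card X + card Y = card (X \<union> Y) + card (X \<inter> Y)"
    using card_Un_Int assms by blast
  have b: "card ((X \<union> Y) - (X \<inter> Y)) = card (X \<union> Y) - card (X \<inter> Y)"
    using assms by (intro card_Diff_subset) auto
  have c: "card (X \<inter> Y) \<le> card (X \<union> Y)"
    using assms by (intro card_mono) auto
  show ?thesis unfolding e b using a c by presburger
qed

lemma lc_sd: assumes "finite c" "finite c'"
  shows "lc v ((c - c') \<union> (c' - c)) = vadd (lc v c) (lc v c')"
proof -
  { fix k
    have "{i \<in> (c - c') \<union> (c' - c). v i k} = ({i\<in>c. v i k} - {i\<in>c'. v i k}) \<union> ({i\<in>c'. v i k} - {i\<in>c. v i k})"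
      by auto
    then have "odd (card {i \<in> (c - c') \<union> (c' - c). v i k}) = (odd (card {i\<in>c. v i k}) \<noteq> odd (card {i\<in>c'. v i k}))"
      using card_sd_parity[of "{i\<in>c. v i k}" "{i\<in>c'. v i k}"] assms by simp }
  then show ?thesis by (simp add: lc_def vadd_def)
qed

lemma lc_cong: "(\<And>i. i \<in> c \<Longrightarrow> v i = w i) \<Longrightarrow> lc v c = lc w c"
proof -
  assume a: "\<And>i. i \<in> c \<Longrightarrow> v i = w i"
  have "\<And>k. {i\<in>c. v i k} = {i\<in>c. w i k}" using a by auto
  then show ?thesis unfolding lc_def by simp
qed

definition subsp :: "(nat \<Rightarrow> bool) set \<Rightarrow> bool" where
  "subsp U \<longleftrightarrow> zv \<in> U \<and> (\<forall>x\<in>U. \<forall>y\<in>U. vadd x y \<in> U)"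

lemma subsp_lc: assumes "subsp U" "finite c" "\<And>i. i \<in> c \<Longrightarrow> v i \<in> U"
  shows "lc v c \<in> U"
  using assms(2,3)
proof (induction c rule: finite_induct)
  case empty then show ?case using assms(1) by (simp add: subsp_def)
next
  case (insert i c) then show ?case using assms(1) by (simp add: lc_insert subsp_def)
qed

lemma subsp_F2n: "subsp (F2n n)" by (simp add: subsp_def F2n_vadd)

definition sp :: "(nat \<Rightarrow> nat \<Rightarrow> bool) \<Rightarrow> nat \<Rightarrow> (nat \<Rightarrow> bool) set" where
  "sp v r = lc v ` Pow {..<r}"
definition indep :: "(nat \<Rightarrow> nat \<Rightarrow> bool) \<Rightarrow> nat \<Rightarrow> bool" where
  "indep v r \<longleftrightarrow> inj_on (lc v) (Pow {..<r})"

lemma finite_sp[simp]: "finite (sp v r)" by (simp add: sp_def)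

lemma card_sp: "indep v r \<Longrightarrow> card (sp v r) = 2 ^ r"
  by (simp add: sp_def indep_def card_image card_Pow)

lemma sp_subsp: "subsp (sp v r)"
  unfolding subsp_def
proof (intro conjI ballI)
  have "lc v {} \<in> lc v ` Pow {..<r}" by blast
  then show "zv \<in> sp v r" unfolding sp_def by simp
  fix x y assume "x \<in> sp v r" "y \<in> sp v r"
  then obtain c c' where "c \<subseteq> {..<r}" "c' \<subseteq> {..<r}" "x = lc v c" "y = lc v c'" by (auto simp: sp_def)
  moreover have "finite c" "finite c'" using calculation finite_subset by blast+
  ultimately show "vadd x y \<in> sp v r"
    unfolding sp_def using lc_sd[of c c' v] by (intro image_eqI[of _ _ "(c - c') \<union> (c' - c)"]) auto
qed

lemma sp_sub: "subsp U \<Longrightarrow> (\<And>i. i < r \<Longrightarrow> v i \<in> U) \<Longrightarrow> sp v r \<subseteq> U"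
proof -
  assume a: "subsp U" "\<And>i. i < r \<Longrightarrow> v i \<in> U"
  show ?thesis unfolding sp_def
  proof
    fix x assume "x \<in> lc v ` Pow {..<r}"
    then obtain c where c: "c \<subseteq> {..<r}" "x = lc v c" by auto
    then have "finite c" using finite_subset by blast
    then show "x \<in> U" using subsp_lc[OF a(1)] a(2) c by blast
  qed
qed

lemma sp_mem: "i < r \<Longrightarrow> v i \<in> sp v r"
proof -
  assume "i < r"
  then have "lc v {i} \<in> lc v ` Pow {..<r}" by (intro imageI) auto
  then show ?thesis unfolding sp_def by simp
qed

lemma zv_sp[simp]: "zv \<in> sp v r" using sp_subsp subsp_def by blast

lemma sp_vadd: "x \<in> sp v r \<Longrightarrow> y \<in> sp v r \<Longrightarrow> vadd x y \<in> sp v r"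
  using sp_subsp subsp_def by blast

lemma lc_remove: "finite c \<Longrightarrow> r \<in> c \<Longrightarrow> lc v c = vadd (v r) (lc v (c - {r}))"
  using lc_insert[of "c - {r}" r v] by (simp add: insert_absorb)

lemma indep_Suc: "indep v (Suc r) \<longleftrightarrow> indep v r \<and> v r \<notin> sp v r"
proof
  assume a: "indep v (Suc r)"
  have "indep v r" using a unfolding indep_def
    by (rule inj_on_subset) auto
  moreover have "v r \<notin> sp v r"
  proof
    assume "v r \<in> sp v r"
    then obtain c where c: "c \<subseteq> {..<r}" "v r = lc v c" by (auto simp: sp_def)
    then have "lc v {r} = lc v c" by simp
    moreover have "{r} \<in> Pow {..<Suc r}" "c \<in> Pow {..<Suc r}" using c by auto
    ultimately have "{r} = c" using a unfolding indep_def inj_on_def by blast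
    then show False using c by auto
  qed
  ultimately show "indep v r \<and> v r \<notin> sp v r" by blast
next
  assume a: "indep v r \<and> v r \<notin> sp v r"
  show "indep v (Suc r)" unfolding indep_def inj_on_def
  proof (intro ballI impI)
    fix c c' assume c: "c \<in> Pow {..<Suc r}" "c' \<in> Pow {..<Suc r}" and e: "lc v c = lc v c'"
    have fin: "finite c" "finite c'" using c finite_subset by auto
    have sub: "c - {r} \<in> Pow {..<r}" "c' - {r} \<in> Pow {..<r}" using c by auto
    show "c = c'"
    proof (cases "r \<in> c"; cases "r \<in> c'")
      assume r: "r \<in> c" "r \<in> c'"
      then have "lc v (c - {r}) = lc v (c' - {r})" using e lc_remove[OF fin(1) r(1)] lc_remove[OF fin(2) r(2)]
        by simp
      then have "c - {r} = c' - {r}" using a sub unfolding indep_def inj_on_def by blast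
      then show ?thesis using r by (metis insert_Diff)
    next
      assume r: "r \<in> c" "r \<notin> c'"
      then have "vadd (v r) (lc v (c - {r})) = lc v c'" using e lc_remove[OF fin(1) r(1)] by simp
      then have "v r = vadd (lc v c') (lc v (c - {r}))"
        using vadd_cancel2[of "v r" "lc v (c - {r})"] by simp
      moreover have "c' \<in> Pow {..<r}" using r c by (auto simp: less_Suc_eq)
      then have "lc v (c - {r}) \<in> sp v r" "lc v c' \<in> sp v r"
        using sub unfolding sp_def by auto
      ultimately show ?thesis using a sp_vadd by auto
    next
      assume r: "r \<notin> c" "r \<in> c'"
      then have "vadd (v r) (lc v (c' - {r})) = lc v c" using e lc_remove[OF fin(2) r(2)] by simp
      then have "v r = vadd (lc v c) (lc v (c' - {r}))"
        using vadd_cancel2[of "v r" "lc v (c' - {r})"] by simp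
      moreover have "c \<in> Pow {..<r}" using r c by (auto simp: less_Suc_eq)
      then have "lc v (c' - {r}) \<in> sp v r" "lc v c \<in> sp v r"
        using sub unfolding sp_def by auto
      ultimately show ?thesis using a sp_vadd by auto
    next
      assume r: "r \<notin> c" "r \<notin> c'"
      then have "c \<in> Pow {..<r}" "c' \<in> Pow {..<r}" using c by (auto simp: less_Suc_eq)
      then show ?thesis using a e unfolding indep_def inj_on_def by blast
    qed
  qed
qed

definition trunc :: "(nat \<Rightarrow> nat \<Rightarrow> bool) \<Rightarrow> nat \<Rightarrow> nat \<Rightarrow> nat \<Rightarrow> bool" where
  "trunc v r = (\<lambda>i. if i < r then v i else zv)"
definition Ind :: "(nat \<Rightarrow> bool) set \<Rightarrow> nat \<Rightarrow> (nat \<Rightarrow> nat \<Rightarrow> bool) set" where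
  "Ind U r = {v. (\<forall>i<r. v i \<in> U) \<and> (\<forall>i\<ge>r. v i = zv) \<and> indep v r}"

lemma lc_cong_less: "c \<subseteq> {..<r} \<Longrightarrow> (\<And>i. i < r \<Longrightarrow> v i = w i) \<Longrightarrow> lc v c = lc w c"
  by (rule lc_cong) auto

lemma indep_cong: "(\<And>i. i < r \<Longrightarrow> v i = w i) \<Longrightarrow> indep v r = indep w r"
  unfolding indep_def by (rule inj_on_cong) (auto intro: lc_cong_less)

lemma sp_cong: "(\<And>i. i < r \<Longrightarrow> v i = w i) \<Longrightarrow> sp v r = sp w r"
  unfolding sp_def by (rule image_cong) (auto intro: lc_cong_less)

lemma Ind_upd: assumes "w \<in> Ind U r" "y \<in> U - sp w r"
  shows "w(r := y) \<in> Ind U (Suc r)"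
proof -
  have c: "\<And>i. i < r \<Longrightarrow> (w(r := y)) i = w i" by simp
  have e1: "indep (w(r := y)) r = indep w r" by (rule indep_cong) simp
  have e2: "sp (w(r := y)) r = sp w r" by (rule sp_cong) simp
  have "indep (w(r := y)) r" using assms(1) e1 by (simp add: Ind_def)
  moreover have "(w(r := y)) r \<notin> sp (w(r := y)) r" using assms(2) e2 by simp
  ultimately have "indep (w(r := y)) (Suc r)" using indep_Suc by blast
  then show ?thesis using assms by (auto simp: Ind_def less_Suc_eq)
qed

lemma trunc_upd[simp]: "w \<in> Ind U r \<Longrightarrow> trunc (w(r := y)) r = w"
  by (auto simp: trunc_def Ind_def fun_eq_iff)

lemma trunc_Ind: assumes "v \<in> Ind U (Suc r)"
  shows "trunc v r \<in> Ind U r" "v r \<in> U - sp (trunc v r) r" "(trunc v r)(r := v r) = v"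
proof -
  have e1: "indep (trunc v r) r = indep v r" by (rule indep_cong) (simp add: trunc_def)
  have e2: "sp (trunc v r) r = sp v r" by (rule sp_cong) (simp add: trunc_def)
  have i: "indep v (Suc r)" using assms by (simp add: Ind_def)
  then have "indep v r" "v r \<notin> sp v r" using indep_Suc by auto
  moreover have "v r \<in> U" using assms by (simp add: Ind_def)
  ultimately show "trunc v r \<in> Ind U r" "v r \<in> U - sp (trunc v r) r"
    using assms e1 e2 by (auto simp: Ind_def trunc_def)
  show "(trunc v r)(r := v r) = v" using assms by (auto simp: trunc_def Ind_def fun_eq_iff)
qed

lemma Ind_bij: "bij_betw (\<lambda>(w,y). w(r := y)) (SIGMA w:{w\<in>Ind U r. P w}. U - sp w r) {v\<in>Ind U (Suc r). P (trunc v r)}"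
proof (rule bij_betw_byWitness[where f'="\<lambda>v. (trunc v r, v r)"])
  show "\<forall>a\<in>(SIGMA w:{w\<in>Ind U r. P w}. U - sp w r). (\<lambda>v. (trunc v r, v r)) ((\<lambda>(w,y). w(r := y)) a) = a"
    by auto
  show "\<forall>a'\<in>{v\<in>Ind U (Suc r). P (trunc v r)}. (\<lambda>(w,y). w(r := y)) ((\<lambda>v. (trunc v r, v r)) a') = a'"
    using trunc_Ind(3) by auto
  show "(\<lambda>(w,y). w(r := y)) ` (SIGMA w:{w\<in>Ind U r. P w}. U - sp w r) \<subseteq> {v\<in>Ind U (Suc r). P (trunc v r)}"
    using Ind_upd by auto
  show "(\<lambda>v. (trunc v r, v r)) ` {v\<in>Ind U (Suc r). P (trunc v r)} \<subseteq> (SIGMA w:{w\<in>Ind U r. P w}. U - sp w r)"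
    using trunc_Ind(1,2) by auto
qed

lemma Ind_0: "Ind U 0 = {\<lambda>_. zv}"
  by (auto simp: Ind_def indep_def fun_eq_iff)

lemma finite_Ind: "finite U \<Longrightarrow> finite (Ind U r)"
proof (induction r)
  case 0 then show ?case by (simp add: Ind_0)
next
  case (Suc r)
  have "{v\<in>Ind U (Suc r). True} = (\<lambda>(w,y). w(r := y)) ` (SIGMA w:{w\<in>Ind U r. True}. U - sp w r)"
    using Ind_bij[of r U "\<lambda>_. True"] by (simp add: bij_betw_def)
  moreover have "finite (SIGMA w:{w\<in>Ind U r. True}. U - sp w r)"
    using Suc by auto
  ultimately show ?case by simp
qed

lemma sp_sub_Ind: "subsp U \<Longrightarrow> w \<in> Ind U r \<Longrightarrow> sp w r \<subseteq> U"
  by (rule sp_sub) (auto simp: Ind_def)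

lemma card_Ind_Suc: assumes "subsp U" "finite U"
  shows "card {v\<in>Ind U (Suc r). P (trunc v r)} = (card U - 2 ^ r) * card {w\<in>Ind U r. P w}"
proof -
  have "card {v\<in>Ind U (Suc r). P (trunc v r)} = card (SIGMA w:{w\<in>Ind U r. P w}. U - sp w r)"
    using Ind_bij[of r U P] by (rule bij_betw_same_card[symmetric])
  also have "\<dots> = (\<Sum>w\<in>{w\<in>Ind U r. P w}. card (U - sp w r))"
    using assms finite_Ind by (intro card_SigmaI) auto
  also have "\<dots> = (\<Sum>w\<in>{w\<in>Ind U r. P w}. card U - 2 ^ r)"
  proof (rule sum.cong)
    fix w assume "w \<in> {w\<in>Ind U r. P w}"
    then have "sp w r \<subseteq> U" "indep w r" using sp_sub_Ind assms by (auto simp: Ind_def)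
    then show "card (U - sp w r) = card U - 2 ^ r"
      using card_Diff_subset[of "sp w r" U] card_sp[of w r] by simp
  qed simp
  finally show ?thesis by simp
qed

lemma card_Ind: assumes "subsp U" "finite U"
  shows "card (Ind U r) = (\<Prod>i<r. card U - 2 ^ i)"
proof (induction r)
  case 0 then show ?case by (simp add: Ind_0)
next
  case (Suc r)
  then show ?case using card_Ind_Suc[OF assms, of r "\<lambda>_. True"] by simp
qed

definition Tup :: "nat \<Rightarrow> nat \<Rightarrow> ((nat \<Rightarrow> bool) \<times> (nat \<Rightarrow> nat \<Rightarrow> bool)) set" where
  "Tup n r = F2n n \<times> Ind (F2n n) r"
definition flatOf :: "nat \<Rightarrow> (nat \<Rightarrow> bool) \<times> (nat \<Rightarrow> nat \<Rightarrow> bool) \<Rightarrow> (nat \<Rightarrow> bool) set" where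
  "flatOf r \<tau> = vadd (fst \<tau>) ` sp (snd \<tau>) r"

lemma lc_vsum: "inj_on v c \<Longrightarrow> lc v c = vsum (v ` c)"
proof -
  assume a: "inj_on v c"
  { fix k
    have "{w \<in> v ` c. w k} = v ` {i\<in>c. v i k}" by auto
    moreover have "card (v ` {i\<in>c. v i k}) = card {i\<in>c. v i k}"
      using a by (intro card_image) (auto intro: inj_on_subset)
    ultimately have "card {w \<in> v ` c. w k} = card {i\<in>c. v i k}" by simp }
  then show ?thesis by (simp add: lc_def vsum_def)
qed

lemma indep_inj: "indep v r \<Longrightarrow> inj_on v {..<r}"
proof (rule inj_onI)
  fix i j assume a: "indep v r" "i \<in> {..<r}" "j \<in> {..<r}" "v i = v j"
  then have "lc v {i} = lc v {j}" by simp
  moreover have "{i} \<in> Pow {..<r}" "{j} \<in> Pow {..<r}" using a by auto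
  ultimately have "{i} = {j}" using a(1) unfolding indep_def inj_on_def by blast
  then show "i = j" by simp
qed

lemma Ind_to_basis:
  assumes "v \<in> Ind (F2n n) r"
  shows "v ` {..<r} \<subseteq> F2n n" "lin_indep2 (v ` {..<r})" "card (v ` {..<r}) = r"
    "span2 (v ` {..<r}) = sp v r"
proof -
  have ind: "indep v r" using assms by (simp add: Ind_def)
  have inj: "inj_on v {..<r}" using indep_inj[OF ind] .
  show "v ` {..<r} \<subseteq> F2n n" using assms by (auto simp: Ind_def)
  show "card (v ` {..<r}) = r" using inj by (simp add: card_image)
  have pw: "Pow (v ` {..<r}) = image v ` Pow {..<r}" by (rule image_Pow_surj[symmetric]) simp
  have lcv: "\<And>c. c \<in> Pow {..<r} \<Longrightarrow> lc v c = vsum (v ` c)"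
    using inj by (intro lc_vsum) (auto intro: inj_on_subset)
  show "span2 (v ` {..<r}) = sp v r"
    unfolding span2_def sp_def pw image_image using lcv by (auto intro: image_cong)
  show "lin_indep2 (v ` {..<r})" unfolding lin_indep2_def
  proof
    show "finite (v ` {..<r})" by simp
    show "inj_on vsum (Pow (v ` {..<r}))"
    proof (rule inj_onI)
      fix X Y assume "X \<in> Pow (v ` {..<r})" "Y \<in> Pow (v ` {..<r})" "vsum X = vsum Y"
      then obtain c c' where c: "c \<in> Pow {..<r}" "c' \<in> Pow {..<r}" "X = v ` c" "Y = v ` c'"
        unfolding pw by auto
      then have "lc v c = lc v c'" using lcv \<open>vsum X = vsum Y\<close> by simp
      then have "c = c'" using ind c unfolding indep_def inj_on_def by blast
      then show "X = Y" using c by simp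
    qed
  qed
qed

lemma basis_to_Ind:
  assumes "B \<subseteq> F2n n" "lin_indep2 B" "card B = r"
  shows "\<exists>v\<in>Ind (F2n n) r. sp v r = span2 B"
proof -
  have fin: "finite B" using assms by (simp add: lin_indep2_def)
  obtain e where e: "bij_betw e {0..<r} B" using ex_bij_betw_nat_finite[OF fin] assms(3) by blast
  then have e': "bij_betw e {..<r} B" by (simp add: atLeast0LessThan)
  define v where "v = (\<lambda>i. if i < r then e i else zv)"
  have ve: "\<And>i. i < r \<Longrightarrow> v i = e i" by (simp add: v_def)
  have vB: "bij_betw v {..<r} B" using e' by (rule bij_betw_cong[THEN iffD1, rotated]) (simp add: ve)
  have inj: "inj_on v {..<r}" using vB by (simp add: bij_betw_def)
  have img: "v ` {..<r} = B" using vB by (simp add: bij_betw_def)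
  have pw: "Pow B = image v ` Pow {..<r}" using image_Pow_surj[OF img] by simp
  have lcv: "\<And>c. c \<in> Pow {..<r} \<Longrightarrow> lc v c = vsum (v ` c)"
    using inj by (intro lc_vsum) (auto intro: inj_on_subset)
  have sp: "sp v r = span2 B"
    unfolding span2_def sp_def pw image_image using lcv by (auto intro: image_cong)
  have "indep v r" unfolding indep_def
  proof (rule inj_onI)
    fix c c' assume c: "c \<in> Pow {..<r}" "c' \<in> Pow {..<r}" "lc v c = lc v c'"
    then have "vsum (v ` c) = vsum (v ` c')" using lcv by simp
    moreover have "v ` c \<in> Pow B" "v ` c' \<in> Pow B" using c pw by auto
    ultimately have "v ` c = v ` c'" using assms(2) unfolding lin_indep2_def inj_on_def by blast
    then show "c = c'" using inj_on_image_Pow[OF inj] c unfolding inj_on_def by blast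
  qed
  moreover have "\<forall>i<r. v i \<in> F2n n" using ve e' assms(1) by (auto simp: bij_betw_def)
  moreover have "\<forall>i\<ge>r. v i = zv" by (simp add: v_def)
  ultimately have "v \<in> Ind (F2n n) r" by (simp add: Ind_def)
  then show ?thesis using sp by blast
qed

lemma flatOf_image: "flatOf r ` Tup n r = flats n r"
proof
  show "flatOf r ` Tup n r \<subseteq> flats n r"
  proof
    fix Q assume "Q \<in> flatOf r ` Tup n r"
    then obtain x v where xv: "x \<in> F2n n" "v \<in> Ind (F2n n) r" "Q = vadd x ` sp v r"
      by (auto simp: Tup_def flatOf_def)
    have "subspace_dim n r (sp v r)" unfolding subspace_dim_def
      using Ind_to_basis[OF xv(2)] by (intro exI[of _ "v ` {..<r}"]) simp
    then show "Q \<in> flats n r" unfolding flats_def using xv by blast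
  qed
  show "flats n r \<subseteq> flatOf r ` Tup n r"
  proof
    fix Q assume "Q \<in> flats n r"
    then obtain x0 B where q: "x0 \<in> F2n n" "B \<subseteq> F2n n" "lin_indep2 B" "card B = r" "Q = vadd x0 ` span2 B"
      unfolding flats_def subspace_dim_def by blast
    obtain v where "v \<in> Ind (F2n n) r" "sp v r = span2 B" using basis_to_Ind q by blast
    then have "(x0, v) \<in> Tup n r" "flatOf r (x0, v) = Q" using q by (auto simp: Tup_def flatOf_def)
    then show "Q \<in> flatOf r ` Tup n r" by force
  qed
qed

lemma vadd_diff: "vadd (vadd a b) (vadd a c) = vadd b c"
  by (auto simp: vadd_def)

lemma coset_eq: assumes "subsp U" "x \<in> vadd x0 ` U"
  shows "vadd x ` U = vadd x0 ` U"
proof -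
  obtain u where u: "u \<in> U" "x = vadd x0 u" using assms by auto
  show ?thesis
  proof
    show "vadd x ` U \<subseteq> vadd x0 ` U"
    proof
      fix z assume "z \<in> vadd x ` U"
      then obtain w where "w \<in> U" "z = vadd x w" by auto
      then have "z = vadd x0 (vadd u w)" "vadd u w \<in> U" using u assms(1) by (auto simp: vadd_assoc subsp_def)
      then show "z \<in> vadd x0 ` U" by blast
    qed
    show "vadd x0 ` U \<subseteq> vadd x ` U"
    proof
      fix z assume "z \<in> vadd x0 ` U"
      then obtain w where "w \<in> U" "z = vadd x0 w" by auto
      then have "z = vadd x (vadd u w)" "vadd u w \<in> U" using u assms(1)
        by (auto simp: subsp_def vadd_def)
      then show "z \<in> vadd x ` U" by blast
    qed
  qed
qed

definition Fc :: "nat \<Rightarrow> nat" where "Fc r = 2 ^ r * (\<Prod>i<r. 2 ^ r - 2 ^ i)"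

lemma Fc_pos: "Fc r > 0"
  unfolding Fc_def by (auto intro!: prod_pos)

lemma card_Ind_F2n: "card (Ind (F2n n) r) = (\<Prod>i<r. 2 ^ n - 2 ^ i)"
  using card_Ind[OF subsp_F2n finite_F2n] by (simp add: card_F2n)

lemma subsp_F2n_sub: "subsp U \<Longrightarrow> U \<subseteq> F2n n \<Longrightarrow> x \<in> F2n n \<Longrightarrow> vadd x ` U \<subseteq> F2n n"
  using F2n_vadd by blast

lemma fiber_eq:
  assumes q: "(x0, v0) \<in> Tup n r"
  defines "Q \<equiv> vadd x0 ` sp v0 r"
  shows "{\<tau>\<in>Tup n r. flatOf r \<tau> = Q} = Q \<times> Ind (sp v0 r) r"
proof -
  define U where "U = sp v0 r"
  have sU: "subsp U" by (simp add: U_def sp_subsp)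
  have x0: "x0 \<in> F2n n" and v0: "v0 \<in> Ind (F2n n) r" using q by (auto simp: Tup_def)
  have UF: "U \<subseteq> F2n n" unfolding U_def using v0 by (intro sp_sub_Ind subsp_F2n)
  have cU: "card U = 2 ^ r" unfolding U_def using v0 card_sp by (simp add: Ind_def)
  have q2: "Q = vadd x0 ` sp v0 r" by (simp add: Q_def)
  have QF: "Q \<subseteq> F2n n" using subsp_F2n_sub[OF sU UF x0] q2 by (simp add: U_def)
  have "{\<tau>\<in>Tup n r. flatOf r \<tau> = Q} = Q \<times> Ind U r"
  proof (intro set_eqI iffI)
    fix \<tau> assume "\<tau> \<in> {\<tau>\<in>Tup n r. flatOf r \<tau> = Q}"
    then obtain x v where t: "\<tau> = (x, v)" "x \<in> F2n n" "v \<in> Ind (F2n n) r" "vadd x ` sp v r = Q"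
      by (cases \<tau>) (auto simp: Tup_def flatOf_def)
    have "vadd x zv \<in> vadd x ` sp v r" by (intro imageI zv_sp)
    then have xQ: "x \<in> Q" using t(4) by simp
    then obtain u2 where u2: "u2 \<in> U" "x = vadd x0 u2" using q2 U_def by auto
    have "\<forall>i<r. v i \<in> U"
    proof (intro allI impI)
      fix i assume "i < r"
      then have "vadd x (v i) \<in> Q" using t(4) sp_mem by blast
      then obtain u1 where u1: "u1 \<in> U" "vadd x (v i) = vadd x0 u1" using q2 U_def by auto
      have "v i = vadd x (vadd x (v i))" by simp
      also have "\<dots> = vadd (vadd x0 u2) (vadd x0 u1)" using u1(2) u2(2) by simp
      finally have "v i = vadd (vadd x0 u2) (vadd x0 u1)" .
      then have "v i = vadd u2 u1" by (simp add: vadd_diff)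
      then show "v i \<in> U" using sU u1 u2 by (simp add: subsp_def)
    qed
    then have "v \<in> Ind U r" using t(3) by (simp add: Ind_def)
    then show "\<tau> \<in> Q \<times> Ind U r" using t xQ by simp
  next
    fix \<tau> assume "\<tau> \<in> Q \<times> Ind U r"
    then obtain x v where t: "\<tau> = (x, v)" "x \<in> Q" "v \<in> Ind U r" by auto
    have xF: "x \<in> F2n n" using t QF by auto
    have vF: "v \<in> Ind (F2n n) r" using t(3) UF by (auto simp: Ind_def)
    have "sp v r \<subseteq> U" using sp_sub_Ind[OF sU t(3)] .
    moreover have "card (sp v r) = card U" using t(3) cU card_sp by (simp add: Ind_def)
    ultimately have spU: "sp v r = U" using card_subset_eq[of U "sp v r"] by (simp add: U_def)
    have "vadd x ` U = vadd x0 ` U" using coset_eq[OF sU] t(2) q2 U_def by simp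
    then have "flatOf r \<tau> = Q" using t spU q2 U_def by (simp add: flatOf_def)
    then show "\<tau> \<in> {\<tau>\<in>Tup n r. flatOf r \<tau> = Q}" using t xF vF by (simp add: Tup_def)
  qed
then show ?thesis by (simp add: U_def)
qed

lemma fiber_card:
  assumes "Q \<in> flats n r"
  shows "card {\<tau>\<in>Tup n r. flatOf r \<tau> = Q} = Fc r"
proof -
  have "Q \<in> flatOf r ` Tup n r" using assms flatOf_image[of r n] by simp
  then obtain \<tau>0 where t0: "\<tau>0 \<in> Tup n r" "Q = flatOf r \<tau>0" by (rule imageE)
  obtain x0 v0 where q: "(x0, v0) \<in> Tup n r" "Q = vadd x0 ` sp v0 r"
    using t0 by (cases \<tau>0) (simp add: flatOf_def)
  define U where "U = sp v0 r"
  have sU: "subsp U" by (simp add: U_def sp_subsp)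
  have v0: "v0 \<in> Ind (F2n n) r" using q by (auto simp: Tup_def)
  have cU: "card U = 2 ^ r" unfolding U_def using v0 card_sp by (simp add: Ind_def)
  have eq: "{\<tau>\<in>Tup n r. flatOf r \<tau> = Q} = Q \<times> Ind U r"
    using fiber_eq[OF q(1)] q(2) U_def by simp
  have cQ: "card Q = 2 ^ r" using q cU U_def
    by (simp add: card_image inj_on_def)
  have "card (Ind U r) = (\<Prod>i<r. 2 ^ r - 2 ^ i)"
    using card_Ind[OF sU] cU by (simp add: U_def)
  then show ?thesis unfolding eq using cQ
    by (simp add: card_cartesian_product Fc_def)
qed

lemma finite_Tup[simp]: "finite (Tup n r)"
  by (simp add: Tup_def finite_Ind)

lemma count_flats:
  "card {\<tau>\<in>Tup n r. P (flatOf r \<tau>)} = Fc r * card {Q\<in>flats n r. P Q}"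
proof -
  let ?T = "{\<tau>\<in>Tup n r. P (flatOf r \<tau>)}"
  have fin: "finite ?T" by simp
  have img: "flatOf r ` ?T = {Q\<in>flats n r. P Q}"
  proof
    show "flatOf r ` ?T \<subseteq> {Q\<in>flats n r. P Q}"
    proof
      fix Q assume "Q \<in> flatOf r ` ?T"
      then obtain \<tau> where t: "\<tau> \<in> Tup n r" "P (flatOf r \<tau>)" "Q = flatOf r \<tau>" by blast
      then have "Q \<in> flatOf r ` Tup n r" by blast
      then show "Q \<in> {Q\<in>flats n r. P Q}" using t flatOf_image[of r n] by simp
    qed
    show "{Q\<in>flats n r. P Q} \<subseteq> flatOf r ` ?T"
    proof
      fix Q assume "Q \<in> {Q\<in>flats n r. P Q}"
      then have "Q \<in> flatOf r ` Tup n r" "P Q" using flatOf_image[of r n] by simp_all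
      then obtain \<tau> where "\<tau> \<in> Tup n r" "Q = flatOf r \<tau>" "P Q" by blast
      then show "Q \<in> flatOf r ` ?T" by blast
    qed
  qed
  have "card ?T = sum (\<lambda>_. 1::nat) ?T" by (rule card_eq_sum)
  also have "\<dots> = sum (\<lambda>Q. sum (\<lambda>_. 1::nat) {\<tau>\<in>?T. flatOf r \<tau> = Q}) (flatOf r ` ?T)"
    by (rule sum.image_gen[OF fin])
  also have "\<dots> = (\<Sum>Q\<in>flatOf r ` ?T. card {\<tau>\<in>?T. flatOf r \<tau> = Q})"
    by simp
  also have "\<dots> = (\<Sum>Q\<in>{Q\<in>flats n r. P Q}. Fc r)"
  proof (rule sum.cong)
    show "flatOf r ` ?T = {Q\<in>flats n r. P Q}" by (rule img)
    fix Q assume "Q \<in> {Q\<in>flats n r. P Q}"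
    then have "{\<tau>\<in>?T. flatOf r \<tau> = Q} = {\<tau>\<in>Tup n r. flatOf r \<tau> = Q}" "Q \<in> flats n r" by auto
    then show "card {\<tau>\<in>?T. flatOf r \<tau> = Q} = Fc r" using fiber_card by simp
  qed
  finally show ?thesis by simp
qed

lemma lam_Tup: "lam n r s A = real (card {\<tau>\<in>Tup n r. card (flatOf r \<tau> \<inter> A) = s}) / real (card (Tup n r))"
proof -
  have a: "card {\<tau>\<in>Tup n r. card (flatOf r \<tau> \<inter> A) = s} = Fc r * card {Q\<in>flats n r. card (Q \<inter> A) = s}"
    by (rule count_flats)
  have b: "card (Tup n r) = Fc r * card (flats n r)"
    using count_flats[of n r "\<lambda>_. True"] by simp
  show ?thesis unfolding lam_def a b using Fc_pos[of r] by simp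
qed

definition phi :: "(nat \<Rightarrow> nat \<Rightarrow> bool) \<Rightarrow> (nat \<Rightarrow> bool) \<Rightarrow> nat \<Rightarrow> bool" where
  "phi u a = lc u {i. a i}"

definition compo :: "(nat \<Rightarrow> bool) \<times> (nat \<Rightarrow> nat \<Rightarrow> bool) \<Rightarrow> (nat \<Rightarrow> bool) \<times> (nat \<Rightarrow> nat \<Rightarrow> bool)
    \<Rightarrow> (nat \<Rightarrow> bool) \<times> (nat \<Rightarrow> nat \<Rightarrow> bool)" where
  "compo \<sigma> \<mu> = (vadd (fst \<sigma>) (phi (snd \<sigma>) (fst \<mu>)), \<lambda>i. phi (snd \<sigma>) (snd \<mu> i))"

lemma F2n_supp: "a \<in> F2n r \<Longrightarrow> {i. a i} \<subseteq> {..<r}"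
  by (auto simp: F2n_def not_le[symmetric])

lemma F2n_fin: "a \<in> F2n r \<Longrightarrow> finite {i. a i}"
  using F2n_supp finite_subset by blast

lemma phi_vadd: "a \<in> F2n r \<Longrightarrow> b \<in> F2n r \<Longrightarrow> phi u (vadd a b) = vadd (phi u a) (phi u b)"
proof -
  assume ab: "a \<in> F2n r" "b \<in> F2n r"
  have "{i. vadd a b i} = ({i. a i} - {i. b i}) \<union> ({i. b i} - {i. a i})" by (auto simp: vadd_def)
  then show ?thesis unfolding phi_def using lc_sd[OF F2n_fin[OF ab(1)] F2n_fin[OF ab(2)]] by simp
qed

lemma phi_zv[simp]: "phi u zv = zv" by (simp add: phi_def zv_def)

lemma phi_char: "phi u (\<lambda>i. i \<in> c) = lc u c" by (simp add: phi_def)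

lemma phi_img: "phi u ` F2n r = sp u r"
  unfolding F2n_image sp_def image_image phi_char by simp

lemma phi_inj: "indep u r \<Longrightarrow> inj_on (phi u) (F2n r)"
proof (rule inj_onI)
  fix a b assume a: "indep u r" "a \<in> F2n r" "b \<in> F2n r" "phi u a = phi u b"
  then have "{i. a i} \<in> Pow {..<r}" "{i. b i} \<in> Pow {..<r}" using F2n_supp by auto
  then have "{i. a i} = {i. b i}" using a unfolding indep_def inj_on_def phi_def by blast
  then show "a = b" by (auto simp: fun_eq_iff)
qed

lemma lc_F2n: "finite c \<Longrightarrow> (\<And>i. i \<in> c \<Longrightarrow> M i \<in> F2n r) \<Longrightarrow> lc M c \<in> F2n r"
  using subsp_lc[OF subsp_F2n] by blast

lemma phi_lc:
  assumes "finite c" "\<And>i. i \<in> c \<Longrightarrow> M i \<in> F2n r"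
  shows "lc (\<lambda>i. phi u (M i)) c = phi u (lc M c)"
  using assms
proof (induction c rule: finite_induct)
  case empty then show ?case by simp
next
  case (insert i c)
  have l: "lc M c \<in> F2n r" using insert by (intro lc_F2n) auto
  have m: "M i \<in> F2n r" using insert by auto
  have "phi u (vadd (M i) (lc M c)) = vadd (phi u (M i)) (phi u (lc M c))"
    using phi_vadd[OF m l] .
  then show ?case using insert by (simp add: lc_insert)
qed

lemma sp_comp: assumes "\<And>i. i < r' \<Longrightarrow> M i \<in> F2n r"
  shows "sp (\<lambda>i. phi u (M i)) r' = phi u ` sp M r'"
proof -
  have "\<And>c. c \<in> Pow {..<r'} \<Longrightarrow> lc (\<lambda>i. phi u (M i)) c = phi u (lc M c)"
    using assms by (intro phi_lc) (auto intro: finite_subset)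
  then show ?thesis unfolding sp_def image_image by (auto intro: image_cong)
qed

lemma Tup_D: "\<sigma> \<in> Tup m r \<Longrightarrow> fst \<sigma> \<in> F2n m \<and> snd \<sigma> \<in> Ind (F2n m) r"
  by (auto simp: Tup_def)

lemma Ind_F2n_sp: "u \<in> Ind (F2n m) r \<Longrightarrow> sp u r \<subseteq> F2n m"
  by (rule sp_sub_Ind[OF subsp_F2n])

lemma comp_Tup: assumes "\<sigma> \<in> Tup m r" "\<mu> \<in> Tup r r'"
  shows "compo \<sigma> \<mu> \<in> Tup m r'"
proof -
  obtain x u where s: "\<sigma> = (x, u)" "x \<in> F2n m" "u \<in> Ind (F2n m) r" using assms(1) by (auto simp: Tup_def)
  obtain a M where t: "\<mu> = (a, M)" "a \<in> F2n r" "M \<in> Ind (F2n r) r'" using assms(2) by (auto simp: Tup_def)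
  have iu: "indep u r" using s by (simp add: Ind_def)
  have spu: "sp u r \<subseteq> F2n m" using Ind_F2n_sp[OF s(3)] .
  have phiF: "\<And>b. b \<in> F2n r \<Longrightarrow> phi u b \<in> F2n m" using phi_img spu by blast
  have "vadd x (phi u a) \<in> F2n m" using phiF t(2) s(2) F2n_vadd by blast
  moreover have "(\<lambda>i. phi u (M i)) \<in> Ind (F2n m) r'"
  proof -
    have MF: "\<And>i. i < r' \<Longrightarrow> M i \<in> F2n r" using t(3) by (simp add: Ind_def)
    have Mz: "\<And>i. i \<ge> r' \<Longrightarrow> M i = zv" using t(3) by (simp add: Ind_def)
    have "indep (\<lambda>i. phi u (M i)) r'" unfolding indep_def
    proof (rule inj_onI)
      fix c c' assume c: "c \<in> Pow {..<r'}" "c' \<in> Pow {..<r'}"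
        "lc (\<lambda>i. phi u (M i)) c = lc (\<lambda>i. phi u (M i)) c'"
      have fc: "finite c" "finite c'" using c(1,2) finite_subset by auto
      have "lc (\<lambda>i. phi u (M i)) c = phi u (lc M c)" using fc(1) c(1) MF by (intro phi_lc) auto
      moreover have "lc (\<lambda>i. phi u (M i)) c' = phi u (lc M c')" using fc(2) c(2) MF by (intro phi_lc) auto
      moreover have "lc M c \<in> F2n r" "lc M c' \<in> F2n r" using fc c MF by (auto intro!: lc_F2n)
      ultimately have "lc M c = lc M c'" using c(3) phi_inj[OF iu] unfolding inj_on_def by metis
      then show "c = c'" using t(3) c(1,2) unfolding Ind_def indep_def inj_on_def by blast
    qed
    then show ?thesis using MF Mz phiF by (simp add: Ind_def)
  qed
  ultimately show ?thesis using s t by (simp add: compo_def Tup_def)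
qed

lemma flat_comp: assumes "\<sigma> \<in> Tup m r" "\<mu> \<in> Tup r r'"
  shows "flatOf r' (compo \<sigma> \<mu>) = (\<lambda>b. vadd (fst \<sigma>) (phi (snd \<sigma>) b)) ` flatOf r' \<mu>"
proof -
  obtain x u where s: "\<sigma> = (x, u)" "x \<in> F2n m" "u \<in> Ind (F2n m) r" using assms(1) by (auto simp: Tup_def)
  obtain a M where t: "\<mu> = (a, M)" "a \<in> F2n r" "M \<in> Ind (F2n r) r'" using assms(2) by (auto simp: Tup_def)
  have MF: "\<And>i. i < r' \<Longrightarrow> M i \<in> F2n r" using t(3) by (simp add: Ind_def)
  have spM: "sp M r' \<subseteq> F2n r" using Ind_F2n_sp[OF t(3)] .
  have "flatOf r' (compo \<sigma> \<mu>) = vadd (vadd x (phi u a)) ` phi u ` sp M r'"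
    using s t sp_comp[OF MF] by (simp add: compo_def flatOf_def)
  also have "\<dots> = (\<lambda>b. vadd x (phi u b)) ` vadd a ` sp M r'"
    unfolding image_image
  proof (rule image_cong)
    fix y assume "y \<in> sp M r'"
    then have "y \<in> F2n r" using spM by blast
    then show "vadd (vadd x (phi u a)) (phi u y) = vadd x (phi u (vadd a y))"
      using t(2) by (simp add: phi_vadd vadd_assoc)
  qed simp
  finally show ?thesis using s t by (simp add: flatOf_def)
qed

lemma flatOf_sub: "\<mu> \<in> Tup r r' \<Longrightarrow> flatOf r' \<mu> \<subseteq> F2n r"
proof -
  assume "\<mu> \<in> Tup r r'"
  then have "fst \<mu> \<in> F2n r" "snd \<mu> \<in> Ind (F2n r) r'" by (auto simp: Tup_def)
  then have "fst \<mu> \<in> F2n r" "sp (snd \<mu>) r' \<subseteq> F2n r" using Ind_F2n_sp by auto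
  then show ?thesis unfolding flatOf_def using F2n_vadd by blast
qed

lemma g_inj: "\<sigma> \<in> Tup m r \<Longrightarrow> inj_on (\<lambda>b. vadd (fst \<sigma>) (phi (snd \<sigma>) b)) (F2n r)"
proof -
  assume "\<sigma> \<in> Tup m r"
  then have "indep (snd \<sigma>) r" by (auto simp: Tup_def Ind_def)
  then have "inj_on (phi (snd \<sigma>)) (F2n r)" by (rule phi_inj)
  then show ?thesis unfolding inj_on_def by simp
qed

lemma card_transfer: "inj_on g X \<Longrightarrow> F \<subseteq> X \<Longrightarrow> card (g ` F \<inter> A) = card (F \<inter> {b\<in>X. g b \<in> A})"
proof -
  assume a: "inj_on g X" "F \<subseteq> X"
  have "g ` F \<inter> A = g ` (F \<inter> {b\<in>X. g b \<in> A})" using a(2) by blast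
  moreover have "inj_on g (F \<inter> {b\<in>X. g b \<in> A})" by (rule inj_on_subset[OF a(1)]) (use a(2) in blast)
  ultimately show ?thesis by (simp add: card_image)
qed

lemma comp_good: assumes "\<sigma> \<in> Tup m r" "\<mu> \<in> Tup r r'"
  shows "card (flatOf r' (compo \<sigma> \<mu>) \<inter> A) =
    card (flatOf r' \<mu> \<inter> {b\<in>F2n r. vadd (fst \<sigma>) (phi (snd \<sigma>) b) \<in> A})"
  unfolding flat_comp[OF assms] by (rule card_transfer[OF g_inj[OF assms(1)] flatOf_sub[OF assms(2)]])

lemma comp_inj: assumes "\<sigma> \<in> Tup m r" shows "inj_on (compo \<sigma>) (Tup r r')"
proof (rule inj_onI)
  fix \<mu> \<mu>' assume a: "\<mu> \<in> Tup r r'" "\<mu>' \<in> Tup r r'" "compo \<sigma> \<mu> = compo \<sigma> \<mu>'"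
  obtain x u where s: "\<sigma> = (x, u)" "u \<in> Ind (F2n m) r" using assms by (auto simp: Tup_def)
  have pi: "inj_on (phi u) (F2n r)" using s by (intro phi_inj) (simp add: Ind_def)
  obtain b M where t: "\<mu> = (b, M)" "b \<in> F2n r" "M \<in> Ind (F2n r) r'" using a(1) by (auto simp: Tup_def)
  obtain b' M' where t': "\<mu>' = (b', M')" "b' \<in> F2n r" "M' \<in> Ind (F2n r) r'" using a(2) by (auto simp: Tup_def)
  have "fst (compo \<sigma> \<mu>) = fst (compo \<sigma> \<mu>')" "snd (compo \<sigma> \<mu>) = snd (compo \<sigma> \<mu>')" using a(3) by simp_all
  then have e1: "phi u b = phi u b'" and e2': "(\<lambda>i. phi u (M i)) = (\<lambda>i. phi u (M' i))"
    using s t t' by (simp_all add: compo_def)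
  have e2: "phi u (M i) = phi u (M' i)" for i using fun_cong[OF e2', of i] by simp
  have "b = b'" using inj_onD[OF pi e1 t(2) t'(2)] .
  moreover have "M = M'"
  proof
    fix i show "M i = M' i"
    proof (cases "i < r'")
      case True
      then have "M i \<in> F2n r" "M' i \<in> F2n r" using t(3) t'(3) by (auto simp: Ind_def)
      then show ?thesis using e2[of i] pi by (simp add: inj_on_eq_iff)
    next
      case False
      then show ?thesis using t(3) t'(3) by (auto simp: Ind_def)
    qed
  qed
  ultimately show "\<mu> = \<mu>'" using t t' by simp
qed

definition ft :: "nat \<Rightarrow> ((nat \<Rightarrow> bool) \<Rightarrow> int) \<Rightarrow> (nat \<Rightarrow> bool) \<Rightarrow> int" where
  "ft N f \<chi> = (\<Sum>x\<in>F2n N. f x * (-1) ^ card {i. \<chi> i \<and> x i})"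
definition supp :: "nat \<Rightarrow> ((nat \<Rightarrow> bool) \<Rightarrow> int) \<Rightarrow> (nat \<Rightarrow> bool) set" where
  "supp N f = {\<psi>\<in>F2n N. ft N f \<psi> \<noteq> 0}"

lemma F2n_Suc: "F2n (Suc N) = F2n N \<union> (\<lambda>x. x(N := True)) ` F2n N"
proof
  show "F2n (Suc N) \<subseteq> F2n N \<union> (\<lambda>x. x(N := True)) ` F2n N"
  proof
    fix x assume x: "x \<in> F2n (Suc N)"
    show "x \<in> F2n N \<union> (\<lambda>x. x(N := True)) ` F2n N"
    proof (cases "x N")
      case True
      then have "x = (x(N := False))(N := True)" "x(N := False) \<in> F2n N"
        using x by (auto simp: F2n_def fun_eq_iff)
      then show ?thesis by blast
    next
      case False
      have "\<forall>i\<ge>N. \<not> x i"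
      proof (intro allI impI)
        fix i assume "N \<le> i"
        then have "i = N \<or> Suc N \<le> i" by arith
        then show "\<not> x i" using x False by (auto simp: F2n_def)
      qed
      then have "x \<in> F2n N" by (simp add: F2n_def)
      then show ?thesis by blast
    qed
  qed
  show "F2n N \<union> (\<lambda>x. x(N := True)) ` F2n N \<subseteq> F2n (Suc N)" by (auto simp: F2n_def)
qed

lemma F2n_N: "x \<in> F2n N \<Longrightarrow> \<not> x N" by (simp add: F2n_def)

lemma inj_upd: "inj_on (\<lambda>x. x(N := True)) (F2n N)"
proof (rule inj_onI)
  fix x y assume "x \<in> F2n N" "y \<in> F2n N" "x(N := True) = y(N := True)"
  then have "\<forall>i. i \<noteq> N \<longrightarrow> x i = y i" by (metis fun_upd_other)
  moreover have "\<not> x N" "\<not> y N" using \<open>x \<in> F2n N\<close> \<open>y \<in> F2n N\<close> F2n_N by auto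
  ultimately show "x = y"
  proof (intro ext)
    fix i show "x i = y i" using \<open>\<forall>i. i \<noteq> N \<longrightarrow> x i = y i\<close> \<open>\<not> x N\<close> \<open>\<not> y N\<close> by (cases "i = N") auto
  qed
qed

lemma disj_upd: "F2n N \<inter> (\<lambda>x. x(N := True)) ` F2n N = {}"
  using F2n_N by fastforce

lemma sum_F2n_Suc: "(\<Sum>x\<in>F2n (Suc N). F x) = (\<Sum>x\<in>F2n N. F x) + (\<Sum>x\<in>F2n N. F (x(N := True)))"
proof -
  have "(\<Sum>x\<in>F2n (Suc N). F x) = (\<Sum>x\<in>F2n N. F x) + (\<Sum>x\<in>(\<lambda>x. x(N := True)) ` F2n N. F x)"
    unfolding F2n_Suc by (rule sum.union_disjoint) (use disj_upd in auto)
  also have "(\<Sum>x\<in>(\<lambda>x. x(N := True)) ` F2n N. F x) = (\<Sum>x\<in>F2n N. F (x(N := True)))"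
    by (rule sum.reindex[OF inj_upd, unfolded comp_def])
  finally show ?thesis .
qed

lemma card_dot1: "\<chi> \<in> F2n N \<Longrightarrow> {i. \<chi> i \<and> (x(N := True)) i} = {i. \<chi> i \<and> x i}"
  using F2n_N by auto
lemma card_dot2: "x \<in> F2n N \<Longrightarrow> {i. (\<chi>(N := True)) i \<and> x i} = {i. \<chi> i \<and> x i}"
  using F2n_N by auto
lemma card_dot3: "x \<in> F2n N \<Longrightarrow> \<chi> \<in> F2n N \<Longrightarrow>
   card {i. (\<chi>(N := True)) i \<and> (x(N := True)) i} = Suc (card {i. \<chi> i \<and> x i})"
proof -
  assume a: "x \<in> F2n N" "\<chi> \<in> F2n N"
  have "{i. (\<chi>(N := True)) i \<and> (x(N := True)) i} = insert N {i. \<chi> i \<and> x i}" by auto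
  moreover have "{i. \<chi> i \<and> x i} \<subseteq> {..<N}" using a(1) by (auto simp: F2n_def not_le[symmetric])
  then have "finite {i. \<chi> i \<and> x i}" using finite_subset by blast
  moreover have "N \<notin> {i. \<chi> i \<and> x i}" using a F2n_N by auto
  ultimately show ?thesis by simp
qed


lemma ft_Suc0: assumes "\<chi> \<in> F2n N"
  shows "ft (Suc N) f \<chi> = ft N (\<lambda>x. f x + f (x(N := True))) \<chi>"
  unfolding ft_def sum_F2n_Suc card_dot1[OF assms] by (simp add: sum.distrib algebra_simps)

lemma ft_Suc1: assumes "\<chi> \<in> F2n N"
  shows "ft (Suc N) f (\<chi>(N := True)) = ft N (\<lambda>x. f x - f (x(N := True))) \<chi>"
proof -
  have "ft (Suc N) f (\<chi>(N := True)) = (\<Sum>x\<in>F2n N. f x * (-1) ^ card {i. \<chi> i \<and> x i})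
     + (\<Sum>x\<in>F2n N. f (x(N := True)) * (-1) ^ Suc (card {i. \<chi> i \<and> x i}))"
    unfolding ft_def sum_F2n_Suc
  proof (intro arg_cong2[where f="(+)"] sum.cong refl)
    fix x assume x: "x \<in> F2n N"
    show "f x * (-1) ^ card {i. (\<chi>(N := True)) i \<and> x i} = f x * (-1) ^ card {i. \<chi> i \<and> x i}"
      by (simp only: card_dot2[OF x])
    show "f (x(N := True)) * (-1) ^ card {i. (\<chi>(N := True)) i \<and> (x(N := True)) i} =
          f (x(N := True)) * (-1) ^ Suc (card {i. \<chi> i \<and> x i})"
      by (simp only: card_dot3[OF x assms])
  qed
  also have "\<dots> = ft N (\<lambda>x. f x - f (x(N := True))) \<chi>"
    unfolding ft_def by (simp add: sum_subtractf sum_negf algebra_simps)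
  finally show ?thesis .
qed

lemma ft_add: "ft N (\<lambda>x. a x + b x) \<chi> = ft N a \<chi> + ft N b \<chi>"
  unfolding ft_def by (simp add: sum.distrib algebra_simps)
lemma ft_diff: "ft N (\<lambda>x. a x - b x) \<chi> = ft N a \<chi> - ft N b \<chi>"
  unfolding ft_def by (simp add: sum_subtractf algebra_simps)

lemma F2n_Suc_cases: "\<chi> \<in> F2n (Suc N) \<Longrightarrow> \<chi>(N := False) \<in> F2n N \<and> (\<chi> = (\<chi>(N := False)) \<or> \<chi> = (\<chi>(N := False))(N := True))"
  by (auto simp: F2n_def fun_eq_iff le_Suc_eq)

lemma supp_Suc: "card (supp (Suc N) f) = card (supp N (\<lambda>x. f x + f (x(N := True)))) + card (supp N (\<lambda>x. f x - f (x(N := True))))"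
proof -
  let ?g = "\<lambda>x. f x + f (x(N := True))" and ?h = "\<lambda>x. f x - f (x(N := True))"
  have eq: "supp (Suc N) f = supp N ?g \<union> (\<lambda>x. x(N := True)) ` supp N ?h"
  proof
    show "supp (Suc N) f \<subseteq> supp N ?g \<union> (\<lambda>x. x(N := True)) ` supp N ?h"
    proof
      fix \<chi> assume c: "\<chi> \<in> supp (Suc N) f"
      then have c': "\<chi>(N := False) \<in> F2n N" "\<chi> = \<chi>(N := False) \<or> \<chi> = (\<chi>(N := False))(N := True)"
        using F2n_Suc_cases by (auto simp: supp_def)
      show "\<chi> \<in> supp N ?g \<union> (\<lambda>x. x(N := True)) ` supp N ?h"
        using c'(2)
      proof
        assume e: "\<chi> = \<chi>(N := False)"
        then have "ft N ?g \<chi> \<noteq> 0" using c c'(1) ft_Suc0[of "\<chi>" N f] by (simp add: supp_def)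
        then show ?thesis using c'(1) e by (simp add: supp_def)
      next
        assume e: "\<chi> = (\<chi>(N := False))(N := True)"
        then have "ft N ?h (\<chi>(N := False)) \<noteq> 0" using c c'(1) ft_Suc1[OF c'(1), of f] by (simp add: supp_def)
        then have "\<chi>(N := False) \<in> supp N ?h" using c'(1) by (simp add: supp_def)
        then show ?thesis using e by blast
      qed
    qed
    show "supp N ?g \<union> (\<lambda>x. x(N := True)) ` supp N ?h \<subseteq> supp (Suc N) f"
    proof
      fix \<chi> assume "\<chi> \<in> supp N ?g \<union> (\<lambda>x. x(N := True)) ` supp N ?h"
      then show "\<chi> \<in> supp (Suc N) f"
      proof
        assume a: "\<chi> \<in> supp N ?g"
        then have "\<chi> \<in> F2n N" by (simp add: supp_def)
        then show ?thesis using a ft_Suc0[of \<chi> N f] F2n_Suc[of N] by (auto simp: supp_def)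
      next
        assume "\<chi> \<in> (\<lambda>x. x(N := True)) ` supp N ?h"
        then obtain \<psi> where p: "\<psi> \<in> supp N ?h" "\<chi> = \<psi>(N := True)" by blast
        then have "\<psi> \<in> F2n N" by (simp add: supp_def)
        then show ?thesis using p ft_Suc1[of \<psi> N f] F2n_Suc[of N] by (auto simp: supp_def)
      qed
    qed
  qed
  have "supp N ?g \<subseteq> F2n N" "supp N ?h \<subseteq> F2n N" by (auto simp: supp_def)
  then have d: "supp N ?g \<inter> (\<lambda>x. x(N := True)) ` supp N ?h = {}" using disj_upd[of N] by blast
  have i: "inj_on (\<lambda>x. x(N := True)) (supp N ?h)" using inj_upd by (rule inj_on_subset) (auto simp: supp_def)
  have "card (supp (Suc N) f) = card (supp N ?g) + card ((\<lambda>x. x(N := True)) ` supp N ?h)"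
    unfolding eq by (rule card_Un_disjoint) (use d in \<open>auto simp: supp_def\<close>)
  then show ?thesis using card_image[OF i] by simp
qed

lemma supp_sub: "supp N (\<lambda>x. a x + b x) \<subseteq> supp N a \<union> supp N b"
  by (auto simp: supp_def ft_add)

lemma supp_sub2: "supp N (\<lambda>x. a x - b x) \<subseteq> supp N a \<union> supp N b"
  by (auto simp: supp_def ft_diff)

lemma finite_supp[simp]: "finite (supp N f)" by (simp add: supp_def)

lemma PCL: "\<chi> \<in> F2n N \<Longrightarrow> \<not> (2::int) ^ (w + 1) dvd ft N f \<chi> \<Longrightarrow> 2 ^ (N - w) \<le> card (supp N f)"
proof (induction N arbitrary: f w \<chi>)
  case 0
  then have "\<chi> \<in> supp 0 f" by (auto simp: supp_def)
  then have "supp 0 f \<noteq> {}" by blast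
  then have "card (supp 0 f) > 0" by (simp add: card_gt_0_iff)
  then have "card (supp 0 f) \<ge> 1" by simp
  then show ?case by simp
next
  case (Suc N)
  let ?g = "\<lambda>x. f x + f (x(N := True))" and ?h = "\<lambda>x. f x - f (x(N := True))"
  let ?f0 = "\<lambda>x. f x" and ?f1 = "\<lambda>x. f (x(N := True))"
  have cs: "card (supp (Suc N) f) = card (supp N ?g) + card (supp N ?h)" by (rule supp_Suc)
  have c': "\<chi>(N := False) \<in> F2n N" "\<chi> = \<chi>(N := False) \<or> \<chi> = (\<chi>(N := False))(N := True)"
    using F2n_Suc_cases Suc.prems(1) by auto
  define \<chi>' where "\<chi>' = \<chi>(N := False)"
  have fg: "ft N ?g \<psi> = ft N ?f0 \<psi> + ft N ?f1 \<psi>" for \<psi> by (rule ft_add)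
  have fh: "ft N ?h \<psi> = ft N ?f0 \<psi> - ft N ?f1 \<psi>" for \<psi> by (rule ft_diff)
  have sg: "supp N ?f0 \<subseteq> supp N ?g \<union> supp N ?h"
    by (auto simp: supp_def fg fh)
  have sh: "supp N ?f1 \<subseteq> supp N ?g \<union> supp N ?h"
    by (auto simp: supp_def fg fh)
  have cu: "card (supp N ?g \<union> supp N ?h) \<le> card (supp N ?g) + card (supp N ?h)" by (rule card_Un_le)
  show ?case
  proof (cases "(\<exists>\<psi>\<in>F2n N. \<not> (2::int) ^ (w + 1) dvd ft N ?g \<psi>) \<and> (\<exists>\<psi>\<in>F2n N. \<not> (2::int) ^ (w + 1) dvd ft N ?h \<psi>)")
    case True
    then obtain p q where "p \<in> F2n N" "\<not> (2::int) ^ (w + 1) dvd ft N ?g p" "q \<in> F2n N" "\<not> (2::int) ^ (w + 1) dvd ft N ?h q"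
      by blast
    then have "2 ^ (N - w) \<le> card (supp N ?g)" "2 ^ (N - w) \<le> card (supp N ?h)" using Suc.IH by blast+
    moreover have "(2::nat) ^ (Suc N - w) \<le> 2 ^ (N - w) + 2 ^ (N - w)"
      by (cases "w \<le> N") (simp_all add: Suc_diff_le)
    ultimately show ?thesis using cs by linarith
  next
    case False
    then have "(\<not> (\<exists>\<psi>\<in>F2n N. \<not> (2::int) ^ (w + 1) dvd ft N ?h \<psi>)) \<or> (\<not> (\<exists>\<psi>\<in>F2n N. \<not> (2::int) ^ (w + 1) dvd ft N ?g \<psi>))"
      by blast
    then show ?thesis
    proof
      assume H: "\<not> (\<exists>\<psi>\<in>F2n N. \<not> (2::int) ^ (w + 1) dvd ft N ?h \<psi>)"
      have "\<chi> = \<chi>'" proof (rule ccontr)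
        assume "\<chi> \<noteq> \<chi>'"
        then have "\<chi> = \<chi>'(N := True)" using c'(2) \<chi>'_def by auto
        then have "ft (Suc N) f \<chi> = ft N ?h \<chi>'" using ft_Suc1[of \<chi>' N f] c'(1) \<chi>'_def by simp
        then show False using H Suc.prems(2) c'(1) \<chi>'_def by auto
      qed
      then have g: "\<not> (2::int) ^ (w + 1) dvd ft N ?g \<chi>'" using ft_Suc0[of \<chi>' N f] c'(1) \<chi>'_def Suc.prems(2) by simp
      have h: "(2::int) ^ (w + 1) dvd ft N ?h \<chi>'" using H c'(1) \<chi>'_def by auto
      have two: "2 * ft N ?f0 \<chi>' = ft N ?g \<chi>' + ft N ?h \<chi>'" using fg fh by simp
      have nd: "\<not> (2::int) ^ w dvd ft N ?f0 \<chi>'"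
      proof
        assume "(2::int) ^ w dvd ft N ?f0 \<chi>'"
        then have "(2::int) ^ (w + 1) dvd 2 * ft N ?f0 \<chi>'" by simp
        moreover have "ft N ?g \<chi>' = 2 * ft N ?f0 \<chi>' - ft N ?h \<chi>'" using two by simp
        ultimately have "(2::int) ^ (w + 1) dvd ft N ?g \<chi>'" using dvd_diff[OF _ h] by simp
        then show False using g by simp
      qed
      then have w1: "w \<ge> 1" by (cases w) auto
      then have "\<not> (2::int) ^ ((w - 1) + 1) dvd ft N ?f0 \<chi>'" using nd by simp
      then have "2 ^ (N - (w - 1)) \<le> card (supp N ?f0)" using Suc.IH c'(1) \<chi>'_def by blast
      moreover have "card (supp N ?f0) \<le> card (supp N ?g \<union> supp N ?h)" using sg by (intro card_mono) auto
      ultimately have "2 ^ (N - (w - 1)) \<le> card (supp (Suc N) f)" using cs cu by linarith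
      moreover have e: "Suc N - w = N - (w - 1)" using w1 by simp
      then have "(2::nat) ^ (Suc N - w) = 2 ^ (N - (w - 1))" by (rule arg_cong)
      ultimately show ?thesis by linarith
    next
      assume G: "\<not> (\<exists>\<psi>\<in>F2n N. \<not> (2::int) ^ (w + 1) dvd ft N ?g \<psi>)"
      have "\<chi> \<noteq> \<chi>'" proof
        assume "\<chi> = \<chi>'"
        then have "ft (Suc N) f \<chi> = ft N ?g \<chi>'" using ft_Suc0[of \<chi>' N f] c'(1) \<chi>'_def by simp
        then show False using G Suc.prems(2) c'(1) \<chi>'_def by auto
      qed
      then have "\<chi> = \<chi>'(N := True)" using c'(2) \<chi>'_def by auto
      then have h: "\<not> (2::int) ^ (w + 1) dvd ft N ?h \<chi>'" using ft_Suc1[of \<chi>' N f] c'(1) \<chi>'_def Suc.prems(2) by simp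
      have g: "(2::int) ^ (w + 1) dvd ft N ?g \<chi>'" using G c'(1) \<chi>'_def by auto
      have two: "2 * ft N ?f1 \<chi>' = ft N ?g \<chi>' - ft N ?h \<chi>'" using fg fh by simp
      have nd: "\<not> (2::int) ^ w dvd ft N ?f1 \<chi>'"
      proof
        assume "(2::int) ^ w dvd ft N ?f1 \<chi>'"
        then have "(2::int) ^ (w + 1) dvd 2 * ft N ?f1 \<chi>'" by simp
        moreover have "ft N ?h \<chi>' = ft N ?g \<chi>' - 2 * ft N ?f1 \<chi>'" using two by simp
        ultimately have "(2::int) ^ (w + 1) dvd ft N ?h \<chi>'" using dvd_diff[OF g] by simp
        then show False using h by simp
      qed
      then have w1: "w \<ge> 1" by (cases w) auto
      then have "\<not> (2::int) ^ ((w - 1) + 1) dvd ft N ?f1 \<chi>'" using nd by simp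
      then have "2 ^ (N - (w - 1)) \<le> card (supp N ?f1)" using Suc.IH c'(1) \<chi>'_def by blast
      moreover have "card (supp N ?f1) \<le> card (supp N ?g \<union> supp N ?h)" using sh by (intro card_mono) auto
      ultimately have "2 ^ (N - (w - 1)) \<le> card (supp (Suc N) f)" using cs cu by linarith
      moreover have e: "Suc N - w = N - (w - 1)" using w1 by simp
      then have "(2::nat) ^ (Suc N - w) = 2 ^ (N - (w - 1))" by (rule arg_cong)
      ultimately show ?thesis by linarith
    qed
  qed
qed

definition par :: "(nat \<Rightarrow> bool) \<Rightarrow> (nat \<Rightarrow> bool) \<Rightarrow> bool" where
  "par \<chi> x = odd (card {i. \<chi> i \<and> x i})"
definition ker :: "nat \<Rightarrow> (nat \<Rightarrow> bool) \<Rightarrow> (nat \<Rightarrow> bool) set" where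
  "ker N \<chi> = {x\<in>F2n N. \<not> par \<chi> x}"

lemma fin_dot: "x \<in> F2n N \<Longrightarrow> finite {i. \<chi> i \<and> x i}"
proof -
  assume "x \<in> F2n N"
  then have "{i. \<chi> i \<and> x i} \<subseteq> {..<N}" by (auto simp: F2n_def not_le[symmetric])
  then show ?thesis using finite_subset by blast
qed

lemma par_vadd: "x \<in> F2n N \<Longrightarrow> y \<in> F2n N \<Longrightarrow> par \<chi> (vadd x y) = (par \<chi> x \<noteq> par \<chi> y)"
proof -
  assume a: "x \<in> F2n N" "y \<in> F2n N"
  have "{i. \<chi> i \<and> vadd x y i} = ({i. \<chi> i \<and> x i} - {i. \<chi> i \<and> y i}) \<union> ({i. \<chi> i \<and> y i} - {i. \<chi> i \<and> x i})"
    by (auto simp: vadd_def)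
  then show ?thesis unfolding par_def using card_sd_parity[OF fin_dot[OF a(1)] fin_dot[OF a(2)]] by simp
qed

lemma par_zv[simp]: "par \<chi> zv = False" by (simp add: par_def zv_def)

lemma ker_sub: "ker N \<chi> \<subseteq> F2n N" by (auto simp: ker_def)

lemma subsp_ker: "subsp (ker N \<chi>)"
  unfolding subsp_def
proof (intro conjI ballI)
  show "zv \<in> ker N \<chi>" by (simp add: ker_def)
  fix x y assume "x \<in> ker N \<chi>" "y \<in> ker N \<chi>"
  then have "x \<in> F2n N" "y \<in> F2n N" "\<not> par \<chi> x" "\<not> par \<chi> y" by (auto simp: ker_def)
  then show "vadd x y \<in> ker N \<chi>" using par_vadd[of x N y \<chi>] F2n_vadd[of x N y] by (simp add: ker_def)
qed

lemma finite_ker[simp]: "finite (ker N \<chi>)" by (rule finite_subset[OF ker_sub finite_F2n])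

definition ev :: "nat \<Rightarrow> nat \<Rightarrow> bool" where "ev m = (\<lambda>i. i = m)"

lemma ev_F2n: "m < N \<Longrightarrow> ev m \<in> F2n N" by (auto simp: ev_def F2n_def)
lemma par_ev: "par \<chi> (ev m) = \<chi> m"
proof -
  have "{i. \<chi> i \<and> ev m i} = (if \<chi> m then {m} else {})" by (auto simp: ev_def)
  then show ?thesis by (simp add: par_def)
qed

lemma card_ker: assumes "\<chi> \<in> F2n (Suc D)" "\<chi> \<noteq> zv"
  shows "card (ker (Suc D) \<chi>) = 2 ^ D"
proof -
  let ?N = "Suc D"
  obtain m where m: "\<chi> m" using assms(2) by (auto simp: zv_def fun_eq_iff)
  then have mN: "m < ?N" using assms(1) by (auto simp: F2n_def not_le[symmetric])
  have e: "ev m \<in> F2n ?N" "par \<chi> (ev m)" using ev_F2n[OF mN] par_ev m by auto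
  have bij: "vadd (ev m) ` ker ?N \<chi> = F2n ?N - ker ?N \<chi>"
  proof
    show "vadd (ev m) ` ker ?N \<chi> \<subseteq> F2n ?N - ker ?N \<chi>"
      using e par_vadd F2n_vadd by (auto simp: ker_def)
    show "F2n ?N - ker ?N \<chi> \<subseteq> vadd (ev m) ` ker ?N \<chi>"
    proof
      fix z assume z: "z \<in> F2n ?N - ker ?N \<chi>"
      then have "vadd (ev m) z \<in> ker ?N \<chi>" using e par_vadd F2n_vadd by (auto simp: ker_def)
      moreover have "z = vadd (ev m) (vadd (ev m) z)" by simp
      ultimately show "z \<in> vadd (ev m) ` ker ?N \<chi>" by blast
    qed
  qed
  have "card (vadd (ev m) ` ker ?N \<chi>) = card (ker ?N \<chi>)" by (rule card_image) (simp add: inj_on_def)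
  then have "card (F2n ?N - ker ?N \<chi>) = card (ker ?N \<chi>)" using bij by simp
  moreover have "card (F2n ?N - ker ?N \<chi>) = card (F2n ?N) - card (ker ?N \<chi>)"
    by (rule card_Diff_subset) (simp_all add: ker_sub)
  moreover have "card (ker ?N \<chi>) \<le> card (F2n ?N)" by (rule card_mono) (simp_all add: ker_sub)
  ultimately show ?thesis using card_F2n[of ?N] by simp
qed

lemma coset_ker: assumes "a \<in> F2n N"
  shows "vadd a ` ker N \<chi> = {z\<in>F2n N. par \<chi> z = par \<chi> a}"
proof
  show "vadd a ` ker N \<chi> \<subseteq> {z\<in>F2n N. par \<chi> z = par \<chi> a}"
    using assms par_vadd F2n_vadd by (auto simp: ker_def)
  show "{z\<in>F2n N. par \<chi> z = par \<chi> a} \<subseteq> vadd a ` ker N \<chi>"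
  proof
    fix z assume z: "z \<in> {z\<in>F2n N. par \<chi> z = par \<chi> a}"
    then have "vadd a z \<in> ker N \<chi>" using assms par_vadd F2n_vadd by (auto simp: ker_def)
    moreover have "z = vadd a (vadd a z)" by simp
    ultimately show "z \<in> vadd a ` ker N \<chi>" by blast
  qed
qed

lemma ker_inj: assumes "\<chi> \<in> F2n N" "\<chi>' \<in> F2n N" "ker N \<chi> = ker N \<chi>'"
  shows "\<chi> = \<chi>'"
proof
  fix m show "\<chi> m = \<chi>' m"
  proof (cases "m < N")
    case True
    then have "ev m \<in> F2n N" by (rule ev_F2n)
    then have "(ev m \<in> ker N \<chi>) = (\<not> \<chi> m)" "(ev m \<in> ker N \<chi>') = (\<not> \<chi>' m)"
      by (simp_all add: ker_def par_ev)
    then show ?thesis using assms(3) by simp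
  next
    case False
    then show ?thesis using assms(1,2) by (simp add: F2n_def)
  qed
qed

definition Fib :: "nat \<Rightarrow> (nat \<Rightarrow> bool) \<Rightarrow> (nat \<Rightarrow> nat \<Rightarrow> bool) set" where
  "Fib D \<chi> = {M\<in>Ind (F2n (Suc D)) (Suc D). sp M D = ker (Suc D) \<chi>}"

definition Cc :: "nat \<Rightarrow> nat" where "Cc D = 2 ^ D * (\<Prod>i<D. 2 ^ D - 2 ^ i)"

lemma card_Fib: assumes "\<chi> \<in> F2n (Suc D)" "\<chi> \<noteq> zv"
  shows "card (Fib D \<chi>) = Cc D"
proof -
  let ?N = "Suc D" let ?K = "ker ?N \<chi>"
  have cK: "card ?K = 2 ^ D" by (rule card_ker[OF assms])
  have eq: "Fib D \<chi> = {M\<in>Ind (F2n ?N) (Suc D). trunc M D \<in> Ind ?K D}"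
  proof (intro set_eqI iffI)
    fix M assume "M \<in> Fib D \<chi>"
    then have M: "M \<in> Ind (F2n ?N) (Suc D)" "sp M D = ?K" by (auto simp: Fib_def)
    have "trunc M D \<in> Ind (F2n ?N) D" using trunc_Ind(1)[OF M(1)] .
    moreover have "\<forall>i<D. trunc M D i \<in> ?K" using M(2) sp_mem[of _ D M] by (simp add: trunc_def)
    ultimately have "trunc M D \<in> Ind ?K D" by (simp add: Ind_def)
    then show "M \<in> {M\<in>Ind (F2n ?N) (Suc D). trunc M D \<in> Ind ?K D}" using M by simp
  next
    fix M assume "M \<in> {M\<in>Ind (F2n ?N) (Suc D). trunc M D \<in> Ind ?K D}"
    then have M: "M \<in> Ind (F2n ?N) (Suc D)" "trunc M D \<in> Ind ?K D" by auto
    have e: "sp (trunc M D) D = sp M D" by (rule sp_cong) (simp add: trunc_def)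
    have "sp (trunc M D) D \<subseteq> ?K" by (rule sp_sub_Ind[OF subsp_ker M(2)])
    moreover have "card (sp (trunc M D) D) = card ?K" using M(2) cK card_sp by (simp add: Ind_def)
    ultimately have "sp (trunc M D) D = ?K" using card_subset_eq[of ?K] by simp
    then show "M \<in> Fib D \<chi>" using M(1) e by (simp add: Fib_def)
  qed
  have sub: "{w\<in>Ind (F2n ?N) D. w \<in> Ind ?K D} = Ind ?K D"
    using ker_sub by (auto simp: Ind_def)
  have "card (Fib D \<chi>) = (card (F2n ?N) - 2 ^ D) * card (Ind ?K D)"
    unfolding eq using card_Ind_Suc[OF subsp_F2n finite_F2n, of ?N D "\<lambda>w. w \<in> Ind ?K D"] sub by simp
  also have "\<dots> = 2 ^ D * (\<Prod>i<D. 2 ^ D - 2 ^ i)"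
    using card_Ind[OF subsp_ker finite_ker, of ?N \<chi> D] cK card_F2n[of ?N] by simp
  finally show ?thesis by (simp add: Cc_def)
qed

lemma prod_identity: "(\<Prod>i<Suc D. (2::nat) ^ Suc D - 2 ^ i) = (2 ^ Suc D - 1) * Cc D"
proof -
  have "(\<Prod>i<Suc D. (2::nat) ^ Suc D - 2 ^ i) = (2 ^ Suc D - 2 ^ 0) * (\<Prod>i<D. 2 ^ Suc D - 2 ^ Suc i)"
    by (rule prod.lessThan_Suc_shift)
  also have "(\<Prod>i<D. (2::nat) ^ Suc D - 2 ^ Suc i) = (\<Prod>i<D. 2 * (2 ^ D - 2 ^ i))"
    by (rule prod.cong) (simp_all add: diff_mult_distrib2)
  also have "\<dots> = 2 ^ D * (\<Prod>i<D. 2 ^ D - 2 ^ i)"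
    by (simp add: prod.distrib)
  finally show ?thesis by (simp add: Cc_def)
qed

lemma card_F2n_nz: "card (F2n N - {zv}) = 2 ^ N - 1"
  using card_F2n[of N] by (simp add: card_Diff_singleton)

lemma Ind_Fib: "Ind (F2n (Suc D)) (Suc D) = (\<Union>\<chi>\<in>F2n (Suc D) - {zv}. Fib D \<chi>)"
  and Fib_disj: "\<chi> \<in> F2n (Suc D) - {zv} \<Longrightarrow> \<chi>' \<in> F2n (Suc D) - {zv} \<Longrightarrow> \<chi> \<noteq> \<chi>' \<Longrightarrow> Fib D \<chi> \<inter> Fib D \<chi>' = {}"
proof -
  let ?N = "Suc D"
  show dj: "\<And>\<chi> \<chi>'. \<chi> \<in> F2n ?N - {zv} \<Longrightarrow> \<chi>' \<in> F2n ?N - {zv} \<Longrightarrow> \<chi> \<noteq> \<chi>' \<Longrightarrow> Fib D \<chi> \<inter> Fib D \<chi>' = {}"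
  proof -
    fix \<chi> \<chi>' assume a: "\<chi> \<in> F2n ?N - {zv}" "\<chi>' \<in> F2n ?N - {zv}" "\<chi> \<noteq> \<chi>'"
    show "Fib D \<chi> \<inter> Fib D \<chi>' = {}"
    proof (rule ccontr)
      assume "Fib D \<chi> \<inter> Fib D \<chi>' \<noteq> {}"
      then obtain M where "M \<in> Fib D \<chi>" "M \<in> Fib D \<chi>'" by blast
      then have "ker ?N \<chi> = ker ?N \<chi>'" by (simp add: Fib_def)
      then show False using ker_inj a by blast
    qed
  qed
  have sub: "(\<Union>\<chi>\<in>F2n ?N - {zv}. Fib D \<chi>) \<subseteq> Ind (F2n ?N) ?N" by (auto simp: Fib_def)
  have fin: "finite (Ind (F2n ?N) ?N)" by (simp add: finite_Ind)
  have "card (\<Union>\<chi>\<in>F2n ?N - {zv}. Fib D \<chi>) = (\<Sum>\<chi>\<in>F2n ?N - {zv}. card (Fib D \<chi>))"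
    by (rule card_UN_disjoint) (use fin sub dj in \<open>auto intro: finite_subset simp: Fib_def\<close>)
  also have "\<dots> = (\<Sum>\<chi>\<in>F2n ?N - {zv}. Cc D)" by (rule sum.cong) (auto simp: card_Fib)
  also have "\<dots> = card (Ind (F2n ?N) ?N)"
    using card_F2n_nz[of ?N] card_Ind_F2n[of ?N ?N] prod_identity[of D] by simp
  finally show "Ind (F2n ?N) ?N = (\<Union>\<chi>\<in>F2n ?N - {zv}. Fib D \<chi>)"
    using card_subset_eq[OF fin sub] by simp
qed

lemma card_pairs:
  assumes "finite A" "finite C"
  shows "card {\<mu>\<in>A \<times> C. P \<mu>} = (\<Sum>M\<in>C. card {a\<in>A. P (a, M)})"
proof -
  have "{\<mu>\<in>A \<times> C. P \<mu>} = (\<lambda>(M,a). (a,M)) ` (SIGMA M:C. {a\<in>A. P (a, M)})" by auto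
  moreover have "inj_on (\<lambda>(M,a). (a,M)) (SIGMA M:C. {a\<in>A. P (a, M)})" by (auto simp: inj_on_def)
  ultimately have "card {\<mu>\<in>A \<times> C. P \<mu>} = card (SIGMA M:C. {a\<in>A. P (a, M)})" by (simp add: card_image)
  also have "\<dots> = (\<Sum>M\<in>C. card {a\<in>A. P (a, M)})" using assms by (intro card_SigmaI) auto
  finally show ?thesis .
qed

lemma card_split: "finite B \<Longrightarrow> card (B - K) + card (B \<inter> K) = card B"
proof -
  assume f: "finite B"
  have "card ((B - K) \<union> (B \<inter> K)) = card (B - K) + card (B \<inter> K)"
    by (rule card_Un_disjoint) (use f in auto)
  moreover have "(B - K) \<union> (B \<inter> K) = B" by blast
  ultimately show ?thesis by simp
qed

lemma card_par: assumes "\<chi> \<in> F2n (Suc D)" "\<chi> \<noteq> zv"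
  shows "card {a\<in>F2n (Suc D). par \<chi> a} = 2 ^ D" "card {a\<in>F2n (Suc D). \<not> par \<chi> a} = 2 ^ D"
proof -
  have k: "{a\<in>F2n (Suc D). \<not> par \<chi> a} = ker (Suc D) \<chi>" by (simp add: ker_def)
  show "card {a\<in>F2n (Suc D). \<not> par \<chi> a} = 2 ^ D" unfolding k by (rule card_ker[OF assms])
  have "{a\<in>F2n (Suc D). par \<chi> a} = F2n (Suc D) - ker (Suc D) \<chi>" by (auto simp: ker_def)
  moreover have "card (F2n (Suc D) - ker (Suc D) \<chi>) = 2 ^ Suc D - 2 ^ D"
    using card_Diff_subset[OF finite_ker ker_sub] card_F2n card_ker[OF assms] by simp
  ultimately show "card {a\<in>F2n (Suc D). par \<chi> a} = 2 ^ D" by simp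
qed

definition cntA :: "nat \<Rightarrow> (nat \<Rightarrow> bool) set \<Rightarrow> nat \<Rightarrow> (nat \<Rightarrow> bool) set \<Rightarrow> nat" where
  "cntA N B S K = card {a\<in>F2n N. card (vadd a ` K \<inter> B) = S}"

lemma cntA_ker: assumes "\<chi> \<in> F2n (Suc D)" "\<chi> \<noteq> zv" "B \<subseteq> F2n (Suc D)"
  shows "cntA (Suc D) B S (ker (Suc D) \<chi>) =
     (if card (B - ker (Suc D) \<chi>) = S then 2 ^ D else 0) + (if card (B \<inter> ker (Suc D) \<chi>) = S then 2 ^ D else 0)"
proof -
  let ?N = "Suc D" let ?K = "ker ?N \<chi>"
  have c: "\<And>a. a \<in> F2n ?N \<Longrightarrow> vadd a ` ?K \<inter> B = (if par \<chi> a then B - ?K else B \<inter> ?K)"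
    using coset_ker assms(3) by (auto simp: ker_def)
  have "{a\<in>F2n ?N. card (vadd a ` ?K \<inter> B) = S} =
        {a\<in>F2n ?N. par \<chi> a \<and> card (B - ?K) = S} \<union> {a\<in>F2n ?N. \<not> par \<chi> a \<and> card (B \<inter> ?K) = S}"
    using c by (auto split: if_splits)
  moreover have "card ({a\<in>F2n ?N. par \<chi> a \<and> card (B - ?K) = S} \<union> {a\<in>F2n ?N. \<not> par \<chi> a \<and> card (B \<inter> ?K) = S})
     = card {a\<in>F2n ?N. par \<chi> a \<and> card (B - ?K) = S} + card {a\<in>F2n ?N. \<not> par \<chi> a \<and> card (B \<inter> ?K) = S}"
    by (rule card_Un_disjoint) auto
  moreover have "card {a\<in>F2n ?N. par \<chi> a \<and> card (B - ?K) = S} = (if card (B - ?K) = S then 2 ^ D else 0)"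
    using card_par(1)[OF assms(1,2)] by auto
  moreover have "card {a\<in>F2n ?N. \<not> par \<chi> a \<and> card (B \<inter> ?K) = S} = (if card (B \<inter> ?K) = S then 2 ^ D else 0)"
    using card_par(2)[OF assms(1,2)] by auto
  ultimately show ?thesis by (simp add: cntA_def)
qed

lemma cnt_formula: assumes "B \<subseteq> F2n (Suc D)"
  shows "card {\<mu>\<in>Tup (Suc D) (Suc D). card (flatOf D \<mu> \<inter> B) = S} =
    (\<Sum>\<chi>\<in>F2n (Suc D) - {zv}. Cc D * cntA (Suc D) B S (ker (Suc D) \<chi>))"
proof -
  let ?N = "Suc D"
  have "card {\<mu>\<in>Tup ?N ?N. card (flatOf D \<mu> \<inter> B) = S} =
     (\<Sum>M\<in>Ind (F2n ?N) ?N. cntA ?N B S (sp M D))"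
    unfolding Tup_def cntA_def flatOf_def by (subst card_pairs) (simp_all add: finite_Ind)
  also have "\<dots> = (\<Sum>M\<in>(\<Union>\<chi>\<in>F2n ?N - {zv}. Fib D \<chi>). cntA ?N B S (sp M D))"
    using Ind_Fib[of D] by simp
  also have "\<dots> = (\<Sum>\<chi>\<in>F2n ?N - {zv}. \<Sum>M\<in>Fib D \<chi>. cntA ?N B S (sp M D))"
  proof (rule sum.UNION_disjoint)
    show "finite (F2n ?N - {zv})" by simp
    show "\<forall>\<chi>\<in>F2n ?N - {zv}. finite (Fib D \<chi>)"
      using finite_Ind[of "F2n ?N" ?N] by (auto simp: Fib_def)
    show "\<forall>\<chi>\<in>F2n ?N - {zv}. \<forall>\<chi>'\<in>F2n ?N - {zv}. \<chi> \<noteq> \<chi>' \<longrightarrow> Fib D \<chi> \<inter> Fib D \<chi>' = {}"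
      using Fib_disj by blast
  qed
  also have "\<dots> = (\<Sum>\<chi>\<in>F2n ?N - {zv}. Cc D * cntA ?N B S (ker ?N \<chi>))"
  proof (rule sum.cong[OF refl])
    fix \<chi> assume c: "\<chi> \<in> F2n ?N - {zv}"
    have "(\<Sum>M\<in>Fib D \<chi>. cntA ?N B S (sp M D)) = (\<Sum>M\<in>Fib D \<chi>. cntA ?N B S (ker ?N \<chi>))"
      by (rule sum.cong) (auto simp: Fib_def)
    also have "\<dots> = Cc D * cntA ?N B S (ker ?N \<chi>)" using card_Fib[of \<chi> D] c by simp
    finally show "(\<Sum>M\<in>Fib D \<chi>. cntA ?N B S (sp M D)) = Cc D * cntA ?N B S (ker ?N \<chi>)" .
  qed
  finally show ?thesis .
qed

lemma card_Tup_NN: "card (Tup (Suc D) (Suc D)) = 2 ^ Suc D * ((2 ^ Suc D - 1) * Cc D)"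
  unfolding Tup_def using card_Ind_F2n[of "Suc D" "Suc D"] prod_identity[of D]
  by (simp add: card_cartesian_product card_F2n)

lemma LL1: assumes "B \<subseteq> F2n (Suc D)" "card B \<noteq> 2 * S"
  shows "2 * card {\<mu>\<in>Tup (Suc D) (Suc D). card (flatOf D \<mu> \<inter> B) = S} \<le> card (Tup (Suc D) (Suc D))"
proof -
  let ?N = "Suc D"
  have le: "cntA ?N B S (ker ?N \<chi>) \<le> 2 ^ D" if c: "\<chi> \<in> F2n ?N - {zv}" for \<chi>
  proof -
    have "card (B - ker ?N \<chi>) + card (B \<inter> ker ?N \<chi>) = card B"
      using card_split finite_subset[OF assms(1) finite_F2n] by blast
    then have "\<not> (card (B - ker ?N \<chi>) = S \<and> card (B \<inter> ker ?N \<chi>) = S)" using assms(2) by auto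
    then show ?thesis using cntA_ker[of \<chi> D B S] c assms(1) by auto
  qed
  have "card {\<mu>\<in>Tup ?N ?N. card (flatOf D \<mu> \<inter> B) = S} \<le> (\<Sum>\<chi>\<in>F2n ?N - {zv}. Cc D * 2 ^ D)"
    unfolding cnt_formula[OF assms(1)] by (rule sum_mono) (simp add: le)
  also have "\<dots> = (2 ^ ?N - 1) * Cc D * 2 ^ D" using card_F2n_nz[of ?N] by simp
  finally show ?thesis unfolding card_Tup_NN by (simp add: ac_simps)
qed

lemma LL2: assumes "B \<subseteq> F2n (Suc D)" "card B = 2 * S"
  shows "card {\<mu>\<in>Tup (Suc D) (Suc D). card (flatOf D \<mu> \<inter> B) = S} =
     2 ^ Suc D * Cc D * card {\<chi>\<in>F2n (Suc D) - {zv}. card (B \<inter> ker (Suc D) \<chi>) = S}"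
proof -
  let ?N = "Suc D"
  let ?Z = "{\<chi>\<in>F2n ?N - {zv}. card (B \<inter> ker ?N \<chi>) = S}"
  have eq: "Cc D * cntA ?N B S (ker ?N \<chi>) = (if card (B \<inter> ker ?N \<chi>) = S then 2 ^ ?N * Cc D else 0)" if c: "\<chi> \<in> F2n ?N - {zv}" for \<chi>
  proof -
    have "card (B - ker ?N \<chi>) + card (B \<inter> ker ?N \<chi>) = card B"
      using card_split finite_subset[OF assms(1) finite_F2n] by blast
    then have "(card (B - ker ?N \<chi>) = S) = (card (B \<inter> ker ?N \<chi>) = S)" using assms(2) by auto
    then show ?thesis using cntA_ker[of \<chi> D B S] c assms(1) by auto
  qed
  have "card {\<mu>\<in>Tup ?N ?N. card (flatOf D \<mu> \<inter> B) = S} = (\<Sum>\<chi>\<in>F2n ?N - {zv}. if card (B \<inter> ker ?N \<chi>) = S then 2 ^ ?N * Cc D else 0)"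
    unfolding cnt_formula[OF assms(1)] by (rule sum.cong) (simp_all add: eq)
  also have "\<dots> = (\<Sum>\<chi>\<in>?Z. 2 ^ ?N * Cc D)"
    by (rule sum.inter_filter[symmetric]) simp
  finally show ?thesis by simp
qed

lemma PCLapp: assumes "B \<subseteq> F2n N" "card B = 2 * S" "S = j * 2 ^ K" "odd j"
  shows "card {\<chi>\<in>F2n N. card (B \<inter> ker N \<chi>) = S} \<le> 2 ^ N - 2 ^ (N - (K + 1))"
proof -
  define f where "f = (\<lambda>x. if x \<in> B then (1::int) else 0)"
  have finB: "finite B" using finite_subset[OF assms(1) finite_F2n] .
  have ftB: "ft N f \<chi> = (\<Sum>x\<in>B. (-1) ^ card {i. \<chi> i \<and> x i})" for \<chi>
  proof -
    have "ft N f \<chi> = (\<Sum>x\<in>F2n N. if x \<in> B then (-1) ^ card {i. \<chi> i \<and> x i} else 0)"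
      unfolding ft_def f_def by (rule sum.cong) auto
    also have "\<dots> = (\<Sum>x\<in>F2n N \<inter> B. (-1) ^ card {i. \<chi> i \<and> x i})"
      by (rule sum.inter_restrict[symmetric]) simp
    also have "F2n N \<inter> B = B" using assms(1) by blast
    finally show ?thesis .
  qed
  have zero: "ft N f \<chi> = 0" if c: "\<chi> \<in> F2n N" "card (B \<inter> ker N \<chi>) = S" for \<chi>
  proof -
    have "(\<Sum>x\<in>B. (-1::int) ^ card {i. \<chi> i \<and> x i}) = (\<Sum>x\<in>B \<inter> ker N \<chi>. (-1::int) ^ card {i. \<chi> i \<and> x i}) + (\<Sum>x\<in>B - ker N \<chi>. (-1::int) ^ card {i. \<chi> i \<and> x i})"
    proof -
      have "B = (B \<inter> ker N \<chi>) \<union> (B - ker N \<chi>)" by blast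
      then show ?thesis using finB by (subst (1) \<open>B = _\<close>) (rule sum.union_disjoint, auto)
    qed
    also have "(\<Sum>x\<in>B \<inter> ker N \<chi>. (-1::int) ^ card {i. \<chi> i \<and> x i}) = (\<Sum>x\<in>B \<inter> ker N \<chi>. 1)"
      by (rule sum.cong) (auto simp: ker_def par_def)
    also have "(\<Sum>x\<in>B - ker N \<chi>. (-1::int) ^ card {i. \<chi> i \<and> x i}) = (\<Sum>x\<in>B - ker N \<chi>. -1)"
      by (rule sum.cong) (use assms(1) in \<open>auto simp: ker_def par_def\<close>)
    moreover have "card (B - ker N \<chi>) = S" using card_split[OF finB, of "ker N \<chi>"] c(2) assms(2) by simp
    ultimately show ?thesis using c(2) ftB by simp
  qed
  have sub: "{\<chi>\<in>F2n N. card (B \<inter> ker N \<chi>) = S} \<subseteq> F2n N - supp N f"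
    using zero by (auto simp: supp_def)
  have "ft N f zv = int (card B)" using ftB[of zv] by (simp add: zv_def)
  then have fz: "ft N f zv = int j * 2 ^ (K + 1)" using assms(2,3) by simp
  have nd: "\<not> (2::int) ^ (K + 1 + 1) dvd ft N f zv"
  proof
    assume "(2::int) ^ (K + 1 + 1) dvd ft N f zv"
    then have "(2::int) ^ (K + 1) * 2 dvd 2 ^ (K + 1) * int j" using fz by (simp add: mult.commute)
    then have "(2::int) dvd int j" by (subst (asm) dvd_mult_cancel_left) auto
    then show False using assms(4) by simp
  qed
  have "2 ^ (N - (K + 1)) \<le> card (supp N f)" using PCL[OF zv_F2n nd] .
  moreover have "card {\<chi>\<in>F2n N. card (B \<inter> ker N \<chi>) = S} \<le> card (F2n N - supp N f)"
    using sub by (intro card_mono) auto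
  moreover have "card (F2n N - supp N f) = 2 ^ N - card (supp N f)"
    using card_Diff_subset[of "supp N f" "F2n N"] card_F2n by (simp add: supp_def)
  ultimately show ?thesis by linarith
qed

lemma sp_full: assumes "M \<in> Ind (F2n N) N" shows "sp M N = F2n N"
proof -
  have "sp M N \<subseteq> F2n N" by (rule Ind_F2n_sp[OF assms])
  moreover have "card (sp M N) = card (F2n N)" using assms card_sp card_F2n by (simp add: Ind_def)
  ultimately show ?thesis using card_subset_eq[OF finite_F2n] by blast
qed

lemma vadd_full: assumes "a \<in> F2n N" shows "vadd a ` F2n N = F2n N"
proof
  show "vadd a ` F2n N \<subseteq> F2n N" using assms F2n_vadd by blast
  show "F2n N \<subseteq> vadd a ` F2n N"
  proof
    fix z assume "z \<in> F2n N"
    then have "vadd a z \<in> F2n N" "z = vadd a (vadd a z)" using assms F2n_vadd by auto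
    then show "z \<in> vadd a ` F2n N" by blast
  qed
qed

lemma flatOf_full: "\<mu> \<in> Tup N N \<Longrightarrow> flatOf N \<mu> = F2n N"
proof -
  assume "\<mu> \<in> Tup N N"
  then have "fst \<mu> \<in> F2n N" "snd \<mu> \<in> Ind (F2n N) N" by (auto simp: Tup_def)
  then show ?thesis unfolding flatOf_def using sp_full vadd_full by simp
qed

lemma card_pairs2:
  assumes "finite A" "finite C"
  shows "card {\<mu>\<in>A \<times> C. P \<mu>} = (\<Sum>a\<in>A. card {M\<in>C. P (a, M)})"
proof -
  have "{\<mu>\<in>A \<times> C. P \<mu>} = (SIGMA a:A. {M\<in>C. P (a, M)})" by auto
  then show ?thesis using assms by (simp add: card_SigmaI)
qed

lemma fib_comp:
  assumes s: "\<sigma> \<in> Tup n N"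
  shows "{\<tau>\<in>Tup n N. flatOf N \<tau> = flatOf N \<sigma>} = compo \<sigma> ` Tup N N"
proof -
  obtain x u where xu: "\<sigma> = (x, u)" by (cases \<sigma>)
  have x: "x \<in> F2n n" and u: "u \<in> Ind (F2n n) N" using s xu by (auto simp: Tup_def)
  have iu: "indep u N" using u by (simp add: Ind_def)
  have fs: "flatOf N \<sigma> = vadd x ` phi u ` F2n N" using xu by (simp add: flatOf_def phi_img)
  show ?thesis
  proof
    show "compo \<sigma> ` Tup N N \<subseteq> {\<tau>\<in>Tup n N. flatOf N \<tau> = flatOf N \<sigma>}"
    proof
      fix \<tau> assume "\<tau> \<in> compo \<sigma> ` Tup N N"
      then obtain \<mu> where m: "\<mu> \<in> Tup N N" "\<tau> = compo \<sigma> \<mu>" by blast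
      have "\<tau> \<in> Tup n N" using comp_Tup[OF s m(1)] m(2) by simp
      moreover have "flatOf N \<tau> = (\<lambda>b. vadd x (phi u b)) ` F2n N"
        using flat_comp[OF s m(1)] flatOf_full[OF m(1)] m(2) xu by simp
      then have "flatOf N \<tau> = flatOf N \<sigma>" using fs by (simp add: image_image)
      ultimately show "\<tau> \<in> {\<tau>\<in>Tup n N. flatOf N \<tau> = flatOf N \<sigma>}" by simp
    qed
    show "{\<tau>\<in>Tup n N. flatOf N \<tau> = flatOf N \<sigma>} \<subseteq> compo \<sigma> ` Tup N N"
    proof
      fix \<tau> assume t: "\<tau> \<in> {\<tau>\<in>Tup n N. flatOf N \<tau> = flatOf N \<sigma>}"
      have "{\<tau>\<in>Tup n N. flatOf N \<tau> = vadd x ` sp u N} = (vadd x ` sp u N) \<times> Ind (sp u N) N"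
        using fiber_eq[of x u n N] s xu by simp
      moreover have "flatOf N \<sigma> = vadd x ` sp u N" using xu by (simp add: flatOf_def)
      ultimately have "\<tau> \<in> (vadd x ` sp u N) \<times> Ind (sp u N) N" using t by simp
      then obtain y w where yw: "\<tau> = (y, w)" "y \<in> vadd x ` phi u ` F2n N" "w \<in> Ind (sp u N) N"
        by (auto simp: phi_img)
      obtain a where a: "a \<in> F2n N" "y = vadd x (phi u a)" using yw(2) by blast
      define M where "M = (\<lambda>i. if i < N then inv_into (F2n N) (phi u) (w i) else zv)"
      have wi: "\<And>i. i < N \<Longrightarrow> w i \<in> phi u ` F2n N" using yw(3) by (simp add: Ind_def phi_img)
      have MF: "\<And>i. i < N \<Longrightarrow> M i \<in> F2n N" using wi by (simp add: M_def inv_into_into)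
      have pM: "\<And>i. phi u (M i) = w i"
      proof -
        fix i show "phi u (M i) = w i"
        proof (cases "i < N")
          case True then show ?thesis using wi[OF True] by (simp add: M_def f_inv_into_f)
        next
          case False then show ?thesis using yw(3) by (simp add: M_def Ind_def)
        qed
      qed
      have "indep M N" unfolding indep_def
      proof (rule inj_onI)
        fix c c' assume c: "c \<in> Pow {..<N}" "c' \<in> Pow {..<N}" "lc M c = lc M c'"
        have fc: "finite c" "finite c'" using c(1,2) finite_subset by auto
        have "lc w c = lc (\<lambda>i. phi u (M i)) c" using pM by simp
        also have "\<dots> = phi u (lc M c)" using fc(1) c(1) MF by (intro phi_lc) auto
        finally have e1: "lc w c = phi u (lc M c)" .
        have "lc w c' = lc (\<lambda>i. phi u (M i)) c'" using pM by simp
        also have "\<dots> = phi u (lc M c')" using fc(2) c(2) MF by (intro phi_lc) auto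
        finally have e2: "lc w c' = phi u (lc M c')" .
        have "lc w c = lc w c'" using e1 e2 c(3) by simp
        then show "c = c'" using yw(3) c(1,2) unfolding Ind_def indep_def inj_on_def by blast
      qed
      then have "M \<in> Ind (F2n N) N" using MF by (simp add: Ind_def M_def)
      then have "(a, M) \<in> Tup N N" using a by (simp add: Tup_def)
      moreover have "compo \<sigma> (a, M) = \<tau>" using xu yw(1) a pM by (simp add: compo_def)
      ultimately show "\<tau> \<in> compo \<sigma> ` Tup N N" by force
    qed
  qed
qed

lemma card_prefix:
  assumes "D < n"
  shows "card {\<tau>\<in>Tup n (Suc D). P (flatOf D \<tau>)} = (2 ^ n - 2 ^ D) * card {\<tau>\<in>Tup n D. P (flatOf D \<tau>)}"
proof -
  have fl: "flatOf D (x, v) = flatOf D (x, trunc v D)" for x v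
  proof -
    have "sp v D = sp (trunc v D) D" by (rule sp_cong) (simp add: trunc_def)
    then show ?thesis by (simp add: flatOf_def)
  qed
  have "card {\<tau>\<in>Tup n (Suc D). P (flatOf D \<tau>)} = (\<Sum>x\<in>F2n n. card {v\<in>Ind (F2n n) (Suc D). P (flatOf D (x, v))})"
    unfolding Tup_def by (rule card_pairs2) (simp_all add: finite_Ind)
  also have "\<dots> = (\<Sum>x\<in>F2n n. card {v\<in>Ind (F2n n) (Suc D). P (flatOf D (x, trunc v D))})"
    by (simp add: fl[symmetric])
  also have "\<dots> = (\<Sum>x\<in>F2n n. (2 ^ n - 2 ^ D) * card {w\<in>Ind (F2n n) D. P (flatOf D (x, w))})"
  proof (rule sum.cong[OF refl])
    fix x show "card {v\<in>Ind (F2n n) (Suc D). P (flatOf D (x, trunc v D))} = (2 ^ n - 2 ^ D) * card {w\<in>Ind (F2n n) D. P (flatOf D (x, w))}"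
      using card_Ind_Suc[OF subsp_F2n finite_F2n, of n D "\<lambda>w. P (flatOf D (x, w))"] card_F2n[of n] by simp
  qed
  also have "\<dots> = (2 ^ n - 2 ^ D) * (\<Sum>x\<in>F2n n. card {w\<in>Ind (F2n n) D. P (flatOf D (x, w))})"
    by (simp add: sum_distrib_left)
  also have "(\<Sum>x\<in>F2n n. card {w\<in>Ind (F2n n) D. P (flatOf D (x, w))}) = card {\<tau>\<in>Tup n D. P (flatOf D \<tau>)}"
    unfolding Tup_def by (rule card_pairs2[symmetric]) (simp_all add: finite_Ind)
  finally show ?thesis .
qed

lemma flat_comp_le: assumes "\<sigma> \<in> Tup m r" "\<mu> \<in> Tup r r''" "r' \<le> r''"
  shows "flatOf r' (compo \<sigma> \<mu>) = (\<lambda>b. vadd (fst \<sigma>) (phi (snd \<sigma>) b)) ` flatOf r' \<mu>"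
proof -
  obtain x u where s: "\<sigma> = (x, u)" "x \<in> F2n m" "u \<in> Ind (F2n m) r" using assms(1) by (auto simp: Tup_def)
  obtain a M where t: "\<mu> = (a, M)" "a \<in> F2n r" "M \<in> Ind (F2n r) r''" using assms(2) by (auto simp: Tup_def)
  have MF: "\<And>i. i < r' \<Longrightarrow> M i \<in> F2n r" using t(3) assms(3) by (simp add: Ind_def)
  have spM: "sp M r' \<subseteq> F2n r" by (rule sp_sub[OF subsp_F2n MF])
  have "flatOf r' (compo \<sigma> \<mu>) = vadd (vadd x (phi u a)) ` phi u ` sp M r'"
    using s t sp_comp[OF MF] by (simp add: compo_def flatOf_def)
  also have "\<dots> = (\<lambda>b. vadd x (phi u b)) ` vadd a ` sp M r'"
    unfolding image_image
  proof (rule image_cong)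
    fix y assume "y \<in> sp M r'"
    then have "y \<in> F2n r" using spM by blast
    then show "vadd (vadd x (phi u a)) (phi u y) = vadd x (phi u (vadd a y))"
      using t(2) by (simp add: phi_vadd vadd_assoc)
  qed simp
  finally show ?thesis using s t by (simp add: flatOf_def)
qed

lemma flatOf_sub_le: assumes "\<mu> \<in> Tup r r''" "r' \<le> r''" shows "flatOf r' \<mu> \<subseteq> F2n r"
proof -
  obtain a M where t: "\<mu> = (a, M)" "a \<in> F2n r" "M \<in> Ind (F2n r) r''" using assms(1) by (auto simp: Tup_def)
  have MF: "\<And>i. i < r' \<Longrightarrow> M i \<in> F2n r" using t(3) assms(2) by (simp add: Ind_def)
  have "sp M r' \<subseteq> F2n r" by (rule sp_sub[OF subsp_F2n MF])
  then show ?thesis using t F2n_vadd unfolding flatOf_def by auto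
qed

lemma comp_good_le: assumes "\<sigma> \<in> Tup m r" "\<mu> \<in> Tup r r''" "r' \<le> r''"
  shows "card (flatOf r' (compo \<sigma> \<mu>) \<inter> A) =
    card (flatOf r' \<mu> \<inter> {b\<in>F2n r. vadd (fst \<sigma>) (phi (snd \<sigma>) b) \<in> A})"
  unfolding flat_comp_le[OF assms] by (rule card_transfer[OF g_inj[OF assms(1)] flatOf_sub_le[OF assms(2,3)]])

lemma card_Tup_pos: "r \<le> n \<Longrightarrow> card (Tup n r) > 0"
proof -
  assume "r \<le> n"
  then have "(\<Prod>i<r. (2::nat) ^ n - 2 ^ i) > 0" by (intro prod_pos) (auto intro: power_strict_increasing)
  then show ?thesis unfolding Tup_def by (simp add: card_cartesian_product card_F2n card_Ind_F2n)
qed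

lemma local_bound:
  assumes s: "\<sigma> \<in> Tup n (Suc D)" and SK: "S = j * 2 ^ K" "odd j"
  defines "\<rho> \<equiv> ((2::real) ^ Suc D - 2 ^ (Suc D - (K + 1))) / (2 ^ Suc D - 1)"
  shows "real (card {\<tau>\<in>Tup n (Suc D). flatOf (Suc D) \<tau> = flatOf (Suc D) \<sigma> \<and> card (flatOf D \<tau> \<inter> A) = S})
      \<le> (if card (flatOf (Suc D) \<sigma> \<inter> A) = 2 * S then \<rho> else 1/2) * real (card {\<tau>\<in>Tup n (Suc D). flatOf (Suc D) \<tau> = flatOf (Suc D) \<sigma>})"
proof -
  let ?N = "Suc D"
  let ?g = "\<lambda>b. vadd (fst \<sigma>) (phi (snd \<sigma>) b)"
  define B where "B = {b\<in>F2n ?N. ?g b \<in> A}"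
  have BF: "B \<subseteq> F2n ?N" by (auto simp: B_def)
  have fib: "{\<tau>\<in>Tup n ?N. flatOf ?N \<tau> = flatOf ?N \<sigma>} = compo \<sigma> ` Tup ?N ?N" by (rule fib_comp[OF s])
  have inj: "inj_on (compo \<sigma>) (Tup ?N ?N)" by (rule comp_inj[OF s])
  have cfib: "card {\<tau>\<in>Tup n ?N. flatOf ?N \<tau> = flatOf ?N \<sigma>} = card (Tup ?N ?N)"
    unfolding fib by (rule card_image[OF inj])
  have "{\<tau>\<in>Tup n ?N. flatOf ?N \<tau> = flatOf ?N \<sigma> \<and> card (flatOf D \<tau> \<inter> A) = S}
        = compo \<sigma> ` {\<mu>\<in>Tup ?N ?N. card (flatOf D (compo \<sigma> \<mu>) \<inter> A) = S}"
  proof (intro set_eqI iffI)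
    fix \<tau> assume a: "\<tau> \<in> {\<tau>\<in>Tup n ?N. flatOf ?N \<tau> = flatOf ?N \<sigma> \<and> card (flatOf D \<tau> \<inter> A) = S}"
    then have "\<tau> \<in> {\<tau>\<in>Tup n ?N. flatOf ?N \<tau> = flatOf ?N \<sigma>}" by simp
    then have "\<tau> \<in> compo \<sigma> ` Tup ?N ?N" using fib by simp
    then obtain \<mu> where m: "\<mu> \<in> Tup ?N ?N" "\<tau> = compo \<sigma> \<mu>" by blast
    then have "\<mu> \<in> {\<mu>\<in>Tup ?N ?N. card (flatOf D (compo \<sigma> \<mu>) \<inter> A) = S}" using a by simp
    then show "\<tau> \<in> compo \<sigma> ` {\<mu>\<in>Tup ?N ?N. card (flatOf D (compo \<sigma> \<mu>) \<inter> A) = S}" using m(2) by blast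
  next
    fix \<tau> assume "\<tau> \<in> compo \<sigma> ` {\<mu>\<in>Tup ?N ?N. card (flatOf D (compo \<sigma> \<mu>) \<inter> A) = S}"
    then obtain \<mu> where m: "\<mu> \<in> Tup ?N ?N" "card (flatOf D (compo \<sigma> \<mu>) \<inter> A) = S" "\<tau> = compo \<sigma> \<mu>" by blast
    then have "\<tau> \<in> compo \<sigma> ` Tup ?N ?N" by blast
    then have "\<tau> \<in> {\<tau>\<in>Tup n ?N. flatOf ?N \<tau> = flatOf ?N \<sigma>}" using fib by simp
    then show "\<tau> \<in> {\<tau>\<in>Tup n ?N. flatOf ?N \<tau> = flatOf ?N \<sigma> \<and> card (flatOf D \<tau> \<inter> A) = S}" using m by simp
  qed
  then have "card {\<tau>\<in>Tup n ?N. flatOf ?N \<tau> = flatOf ?N \<sigma> \<and> card (flatOf D \<tau> \<inter> A) = S}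
        = card {\<mu>\<in>Tup ?N ?N. card (flatOf D (compo \<sigma> \<mu>) \<inter> A) = S}"
    using card_image[OF inj_on_subset[OF inj]] by simp
  also have "{\<mu>\<in>Tup ?N ?N. card (flatOf D (compo \<sigma> \<mu>) \<inter> A) = S} = {\<mu>\<in>Tup ?N ?N. card (flatOf D \<mu> \<inter> B) = S}"
    using comp_good_le[OF s, of _ ?N D A] by (auto simp: B_def)
  finally have cnt: "card {\<tau>\<in>Tup n ?N. flatOf ?N \<tau> = flatOf ?N \<sigma> \<and> card (flatOf D \<tau> \<inter> A) = S}
     = card {\<mu>\<in>Tup ?N ?N. card (flatOf D \<mu> \<inter> B) = S}" .
  have cB: "card (flatOf ?N \<sigma> \<inter> A) = card B"
  proof -
    have "flatOf ?N \<sigma> = ?g ` F2n ?N" using s by (simp add: flatOf_def phi_img[symmetric] image_image Tup_def)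
    then have "card (flatOf ?N \<sigma> \<inter> A) = card (F2n ?N \<inter> B)"
      using card_transfer[OF g_inj[OF s], of "F2n ?N" A] by (simp add: B_def)
    then show ?thesis using BF by (simp add: Int_absorb1)
  qed
  show ?thesis
  proof (cases "card B = 2 * S")
    case False
    have "2 * card {\<mu>\<in>Tup ?N ?N. card (flatOf D \<mu> \<inter> B) = S} \<le> card (Tup ?N ?N)" by (rule LL1[OF BF False])
    then show ?thesis using cnt cfib cB False by simp
  next
    case True
    let ?Z = "card {\<chi>\<in>F2n ?N - {zv}. card (B \<inter> ker ?N \<chi>) = S}"
    have Z: "?Z \<le> 2 ^ ?N - 2 ^ (?N - (K + 1))"
    proof -
      have "?Z \<le> card {\<chi>\<in>F2n ?N. card (B \<inter> ker ?N \<chi>) = S}" by (rule card_mono) auto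
      also have "\<dots> \<le> 2 ^ ?N - 2 ^ (?N - (K + 1))" by (rule PCLapp[OF BF True SK])
      finally show ?thesis .
    qed
    have c2: "card {\<mu>\<in>Tup ?N ?N. card (flatOf D \<mu> \<inter> B) = S} = 2 ^ ?N * Cc D * ?Z" by (rule LL2[OF BF True])
    have le2: "(2::nat) ^ (?N - (K + 1)) \<le> 2 ^ ?N" by (intro power_increasing) auto
    have Zr0: "real ?Z \<le> real (2 ^ ?N - 2 ^ (?N - (K + 1)))" using Z by (simp only: of_nat_le_iff)
    have Zr1: "real ((2::nat) ^ ?N - 2 ^ (?N - (K + 1))) = (2::real) ^ ?N - 2 ^ (?N - (K + 1))"
      using le2 by (simp add: of_nat_diff)
    have Zr: "real ?Z \<le> 2 ^ ?N - 2 ^ (?N - (K + 1))" using Zr0 Zr1 by simp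
    have "(1::real) \<le> 2 ^ D" by simp
    then have pos: "(2::real) ^ ?N - 1 > 0" by (simp only: power_Suc)
    define C where "C = real (Cc D)"
    define P where "P = (2::real) ^ ?N"
    define Q where "Q = (2::real) ^ (?N - (K + 1))"
    have "real (card (Tup ?N ?N)) = P * ((P - 1) * C)"
      unfolding card_Tup_NN P_def C_def by (simp add: of_nat_diff)
    moreover have "real (card {\<mu>\<in>Tup ?N ?N. card (flatOf D \<mu> \<inter> B) = S}) = P * C * real ?Z"
      unfolding c2 P_def C_def by simp
    moreover have "P * C * real ?Z \<le> \<rho> * (P * ((P - 1) * C))"
    proof -
      have p1: "P - 1 > 0" using pos by (simp add: P_def)
      have r: "\<rho> = (P - Q) / (P - 1)" by (simp add: \<rho>_def P_def Q_def)
      have "(P - Q) / (P - 1) * (P * ((P - 1) * C)) = P * C * (P - Q)"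
        using p1 by (simp add: field_simps)
      then have "\<rho> * (P * ((P - 1) * C)) = P * C * (P - Q)" unfolding r .
      moreover have "P * C * real ?Z \<le> P * C * (P - Q)"
        using Zr by (intro mult_left_mono) (auto simp: P_def C_def Q_def)
      ultimately show ?thesis by linarith
    qed
    ultimately show ?thesis using cnt cfib cB True by simp
  qed
qed

lemma card_by_image: assumes "finite T"
  shows "card {\<tau>\<in>T. P \<tau>} = (\<Sum>Q\<in>f ` T. card {\<tau>\<in>T. f \<tau> = Q \<and> P \<tau>})"
proof -
  have "card {\<tau>\<in>T. P \<tau>} = (\<Sum>\<tau>\<in>T. if P \<tau> then 1 else 0)"
    using sum.inter_filter[OF assms, of "\<lambda>_. 1::nat" P] by simp
  also have "\<dots> = (\<Sum>Q\<in>f ` T. \<Sum>\<tau>\<in>{\<tau>\<in>T. f \<tau> = Q}. if P \<tau> then 1 else 0)"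
    by (rule sum.image_gen[OF assms])
  also have "\<dots> = (\<Sum>Q\<in>f ` T. card {\<tau>\<in>T. f \<tau> = Q \<and> P \<tau>})"
  proof (rule sum.cong[OF refl])
    fix Q
    have "(\<Sum>\<tau>\<in>{\<tau>\<in>T. f \<tau> = Q}. if P \<tau> then 1 else 0) = card {\<tau>\<in>{\<tau>\<in>T. f \<tau> = Q}. P \<tau>}"
      using sum.inter_filter[of "{\<tau>\<in>T. f \<tau> = Q}" "\<lambda>_. 1::nat" P] assms by simp
    also have "{\<tau>\<in>{\<tau>\<in>T. f \<tau> = Q}. P \<tau>} = {\<tau>\<in>T. f \<tau> = Q \<and> P \<tau>}" by blast
    finally show "(\<Sum>\<tau>\<in>{\<tau>\<in>T. f \<tau> = Q}. if P \<tau> then 1 else 0) = card {\<tau>\<in>T. f \<tau> = Q \<and> P \<tau>}" .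
  qed
  finally show ?thesis .
qed

lemma aux_div: "(t::real) > 0 \<Longrightarrow> (t / 2 + c * h) / t = 1/2 + c * (h / t)"
  by (simp add: add_divide_distrib)

lemma main_ineq:
  assumes n: "Suc D \<le> n" and SK: "S = j * 2 ^ K" "odd j"
  defines "\<rho> \<equiv> ((2::real) ^ Suc D - 2 ^ (Suc D - (K + 1))) / (2 ^ Suc D - 1)"
  shows "lam n D S A \<le> 1/2 + (\<rho> - 1/2) * lam n (Suc D) (2 * S) A"
proof -
  let ?N = "Suc D" let ?T = "Tup n ?N"
  let ?G = "card {\<tau>\<in>?T. card (flatOf D \<tau> \<inter> A) = S}"
  let ?H = "card {\<tau>\<in>?T. card (flatOf ?N \<tau> \<inter> A) = 2 * S}"
  let ?I = "flatOf ?N ` ?T"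
  let ?Fb = "\<lambda>Q. card {\<tau>\<in>?T. flatOf ?N \<tau> = Q}"
  have Dn: "D < n" using n by simp
  have Tpos: "card ?T > 0" using card_Tup_pos n by blast
  have k: "(2::nat) ^ n - 2 ^ D > 0" using Dn by (simp add: power_strict_increasing)
  have l1: "lam n D S A = real ?G / real (card ?T)"
  proof -
    have a: "?G = (2 ^ n - 2 ^ D) * card {\<tau>\<in>Tup n D. card (flatOf D \<tau> \<inter> A) = S}"
      by (rule card_prefix[OF Dn])
    have b: "card ?T = (2 ^ n - 2 ^ D) * card (Tup n D)"
      using card_prefix[OF Dn, of "\<lambda>_. True" ] by simp
    show ?thesis unfolding lam_Tup a b using k by simp
  qed
  have l2: "lam n ?N (2 * S) A = real ?H / real (card ?T)" by (rule lam_Tup)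
  have w: "real (card {\<tau>\<in>?T. flatOf ?N \<tau> = Q \<and> card (flatOf D \<tau> \<inter> A) = S})
     \<le> (if card (Q \<inter> A) = 2 * S then \<rho> else 1/2) * real (?Fb Q)" if Q: "Q \<in> ?I" for Q
  proof -
    obtain \<sigma> where s: "\<sigma> \<in> ?T" "Q = flatOf ?N \<sigma>" using Q by blast
    show ?thesis using local_bound[OF s(1) SK, of A] s(2) unfolding \<rho>_def by simp
  qed
  have "real ?G = (\<Sum>Q\<in>?I. real (card {\<tau>\<in>?T. flatOf ?N \<tau> = Q \<and> card (flatOf D \<tau> \<inter> A) = S}))"
    using card_by_image[of ?T "\<lambda>\<tau>. card (flatOf D \<tau> \<inter> A) = S" "flatOf ?N"] by simp
  also have "\<dots> \<le> (\<Sum>Q\<in>?I. (if card (Q \<inter> A) = 2 * S then \<rho> else 1/2) * real (?Fb Q))"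
    by (rule sum_mono) (rule w)
  also have "\<dots> = (\<Sum>Q\<in>?I. 1/2 * real (?Fb Q) + (\<rho> - 1/2) * real (if card (Q \<inter> A) = 2 * S then ?Fb Q else 0))"
  proof (rule sum.cong[OF refl])
    fix Q show "(if card (Q \<inter> A) = 2 * S then \<rho> else 1/2) * real (?Fb Q) = 1/2 * real (?Fb Q) + (\<rho> - 1/2) * real (if card (Q \<inter> A) = 2 * S then ?Fb Q else 0)"
      by (cases "card (Q \<inter> A) = 2 * S") (simp_all add: algebra_simps)
  qed
  also have "\<dots> = (\<Sum>Q\<in>?I. 1/2 * real (?Fb Q)) + (\<rho> - 1/2) * (\<Sum>Q\<in>?I. real (if card (Q \<inter> A) = 2 * S then ?Fb Q else 0))"
    by (simp only: sum.distrib sum_distrib_left)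
  also have "(\<Sum>Q\<in>?I. 1/2 * real (?Fb Q)) = real (card ?T) / 2"
  proof -
    have "card ?T = (\<Sum>Q\<in>?I. ?Fb Q)"
      using card_by_image[of ?T "\<lambda>_. True" "flatOf ?N"] by simp
    then have e: "real (card ?T) = (\<Sum>Q\<in>?I. real (?Fb Q))" by (simp add: of_nat_sum)
    show ?thesis unfolding e by (simp add: sum_divide_distrib)
  qed
  also have "(\<Sum>Q\<in>?I. real (if card (Q \<inter> A) = 2 * S then ?Fb Q else 0)) = real ?H"
  proof -
    have "?H = (\<Sum>Q\<in>?I. card {\<tau>\<in>?T. flatOf ?N \<tau> = Q \<and> card (flatOf ?N \<tau> \<inter> A) = 2 * S})"
      by (rule card_by_image) simp
    also have "\<dots> = (\<Sum>Q\<in>?I. if card (Q \<inter> A) = 2 * S then ?Fb Q else 0)"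
    proof (rule sum.cong[OF refl])
      fix Q
      show "card {\<tau>\<in>?T. flatOf ?N \<tau> = Q \<and> card (flatOf ?N \<tau> \<inter> A) = 2 * S} = (if card (Q \<inter> A) = 2 * S then ?Fb Q else 0)"
      proof (cases "card (Q \<inter> A) = 2 * S")
        case True
        then have "{\<tau>\<in>?T. flatOf ?N \<tau> = Q \<and> card (flatOf ?N \<tau> \<inter> A) = 2 * S} = {\<tau>\<in>?T. flatOf ?N \<tau> = Q}" by auto
        then show ?thesis using True by simp
      next
        case False
        then have "{\<tau>\<in>?T. flatOf ?N \<tau> = Q \<and> card (flatOf ?N \<tau> \<inter> A) = 2 * S} = {}" by auto
        then show ?thesis using False by simp
      qed
    qed
    finally show ?thesis by simp
  qed
  finally have key: "real ?G \<le> real (card ?T) / 2 + (\<rho> - 1/2) * real ?H" .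
  have "real ?G / real (card ?T) \<le> (real (card ?T) / 2 + (\<rho> - 1/2) * real ?H) / real (card ?T)"
    using key Tpos by (simp add: divide_right_mono)
  also have "\<dots> = 1/2 + (\<rho> - 1/2) * (real ?H / real (card ?T))"
    using Tpos by (intro aux_div) simp
  finally show ?thesis unfolding l1 l2 .
qed

lemma card_prefix_gen:
  "card {\<tau>\<in>Tup n (Suc r). P (fst \<tau>, trunc (snd \<tau>) r)} = (2 ^ n - 2 ^ r) * card {\<tau>\<in>Tup n r. P \<tau>}"
proof -
  have "card {\<tau>\<in>Tup n (Suc r). P (fst \<tau>, trunc (snd \<tau>) r)} = (\<Sum>x\<in>F2n n. card {v\<in>Ind (F2n n) (Suc r). P (x, trunc v r)})"
    unfolding Tup_def by (subst card_pairs2) (simp_all add: finite_Ind)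
  also have "\<dots> = (\<Sum>x\<in>F2n n. (2 ^ n - 2 ^ r) * card {w\<in>Ind (F2n n) r. P (x, w)})"
  proof (rule sum.cong[OF refl])
    fix x show "card {v\<in>Ind (F2n n) (Suc r). P (x, trunc v r)} = (2 ^ n - 2 ^ r) * card {w\<in>Ind (F2n n) r. P (x, w)}"
      using card_Ind_Suc[OF subsp_F2n finite_F2n, of n r "\<lambda>w. P (x, w)"] card_F2n[of n] by simp
  qed
  also have "\<dots> = (2 ^ n - 2 ^ r) * (\<Sum>x\<in>F2n n. card {w\<in>Ind (F2n n) r. P (x, w)})"
    by (simp add: sum_distrib_left)
  also have "(\<Sum>x\<in>F2n n. card {w\<in>Ind (F2n n) r. P (x, w)}) = card {\<tau>\<in>Tup n r. P \<tau>}"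
    unfolding Tup_def by (subst card_pairs2) (simp_all add: finite_Ind)
  finally show ?thesis .
qed

lemma flatOf_trunc: "D \<le> r \<Longrightarrow> flatOf D (fst \<tau>, trunc (snd \<tau>) r) = flatOf D \<tau>"
proof -
  assume "D \<le> r"
  then have "sp (trunc (snd \<tau>) r) D = sp (snd \<tau>) D" by (intro sp_cong) (simp add: trunc_def)
  then show ?thesis by (simp add: flatOf_def)
qed

lemma card_prefix_iter:
  "card {\<tau>\<in>Tup n (D + k). P (flatOf D \<tau>)} = (\<Prod>i<k. 2 ^ n - 2 ^ (D + i)) * card {\<tau>\<in>Tup n D. P (flatOf D \<tau>)}"
proof (induction k)
  case 0 then show ?case by simp
next
  case (Suc k)
  have "card {\<tau>\<in>Tup n (Suc (D + k)). P (flatOf D \<tau>)} = card {\<tau>\<in>Tup n (Suc (D + k)). P (flatOf D (fst \<tau>, trunc (snd \<tau>) (D + k)))}"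
    by (simp add: flatOf_trunc)
  also have "\<dots> = (2 ^ n - 2 ^ (D + k)) * card {\<tau>\<in>Tup n (D + k). P (flatOf D \<tau>)}"
    using card_prefix_gen[of n "D + k" "\<lambda>\<tau>. P (flatOf D \<tau>)"] by simp
  finally show ?case using Suc by (simp add: mult.assoc mult.left_commute)
qed

lemma ext_exists: assumes "subsp U" "finite U" "w \<in> Ind U r" "2 ^ (r + k) \<le> card U"
  shows "\<exists>v\<in>Ind U (r + k). \<forall>i<r. v i = w i"
  using assms(4)
proof (induction k)
  case 0 then show ?case using assms(3) by auto
next
  case (Suc k)
  have "(2::nat) ^ (r + k) \<le> 2 ^ (r + Suc k)" by (intro power_increasing) auto
  then have "2 ^ (r + k) \<le> card U" using Suc.prems by linarith
  then obtain v where v: "v \<in> Ind U (r + k)" "\<forall>i<r. v i = w i" using Suc.IH by blast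
  have "card (sp v (r + k)) = 2 ^ (r + k)" using v card_sp by (simp add: Ind_def)
  moreover have "(2::nat) ^ (r + k) < 2 ^ (r + Suc k)" by (intro power_strict_increasing) auto
  ultimately have "card (sp v (r + k)) < card U" using Suc.prems by linarith
  have "U - sp v (r + k) \<noteq> {}"
  proof
    assume "U - sp v (r + k) = {}"
    then have "U \<subseteq> sp v (r + k)" by blast
    then have "card U \<le> card (sp v (r + k))" by (intro card_mono) simp_all
    then show False using \<open>card (sp v (r + k)) < card U\<close> by simp
  qed
  then obtain y where y: "y \<in> U - sp v (r + k)" by blast
  have "v(r + k := y) \<in> Ind U (Suc (r + k))" by (rule Ind_upd[OF v(1) y])
  moreover have "\<forall>i<r. (v(r + k := y)) i = w i" using v(2) by simp
  ultimately show ?case by (intro bexI[of _ "v(r + k := y)"]) simp_all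
qed

lemma phi_ev: "phi u (ev j) = u j"
proof -
  have "{i. ev j i} = {j}" by (auto simp: ev_def)
  then show ?thesis by (simp add: phi_def)
qed

lemma compo_inj_sigma:
  assumes mu: "(a, M) \<in> Tup n n"
  shows "inj_on (\<lambda>\<sigma>. compo \<sigma> (a, M)) (Tup m n)"
proof (rule inj_onI)
  fix \<sigma> \<sigma>' assume s: "\<sigma> \<in> Tup m n" "\<sigma>' \<in> Tup m n" "compo \<sigma> (a, M) = compo \<sigma>' (a, M)"
  obtain x u where xu: "\<sigma> = (x, u)" "u \<in> Ind (F2n m) n" using s(1) by (cases \<sigma>) (auto simp: Tup_def)
  obtain x' u' where xu': "\<sigma>' = (x', u')" "u' \<in> Ind (F2n m) n" using s(2) by (cases \<sigma>') (auto simp: Tup_def)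
  have M: "M \<in> Ind (F2n n) n" and a: "a \<in> F2n n" using mu by (auto simp: Tup_def)
  have MF: "\<And>i. i < n \<Longrightarrow> M i \<in> F2n n" using M by (simp add: Ind_def)
  have "fst (compo \<sigma> (a, M)) = fst (compo \<sigma>' (a, M))" "snd (compo \<sigma> (a, M)) = snd (compo \<sigma>' (a, M))"
    using s(3) by simp_all
  then have e1: "vadd x (phi u a) = vadd x' (phi u' a)" and e2': "(\<lambda>i. phi u (M i)) = (\<lambda>i. phi u' (M i))"
    using xu xu' by (simp_all add: compo_def)
  have uu: "u = u'"
  proof
    fix j show "u j = u' j"
    proof (cases "j < n")
      case True
      then have "ev j \<in> sp M n" using sp_full[OF M] ev_F2n by simp
      then obtain c where c: "c \<subseteq> {..<n}" "ev j = lc M c" by (auto simp: sp_def)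
      have fc: "finite c" using c(1) finite_subset by blast
      have "u j = phi u (lc M c)" using phi_ev[of u j] c(2) by simp
      also have "\<dots> = lc (\<lambda>i. phi u (M i)) c" using fc c(1) MF by (intro phi_lc[symmetric]) auto
      also have "\<dots> = lc (\<lambda>i. phi u' (M i)) c" using e2' by simp
      also have "\<dots> = phi u' (lc M c)" using fc c(1) MF by (intro phi_lc) auto
      also have "\<dots> = u' j" using phi_ev[of u' j] c(2) by simp
      finally show ?thesis .
    next
      case False
      then show ?thesis using xu(2) xu'(2) by (simp add: Ind_def)
    qed
  qed
  then have "x = x'" using e1 by simp
  then show "\<sigma> = \<sigma>'" using xu xu' uu by simp
qed

lemma flatOf_cong: "fst \<tau> = fst \<tau>' \<Longrightarrow> (\<And>i. i < D \<Longrightarrow> snd \<tau> i = snd \<tau>' i) \<Longrightarrow> flatOf D \<tau> = flatOf D \<tau>'"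
proof -
  assume a: "fst \<tau> = fst \<tau>'" "\<And>i. i < D \<Longrightarrow> snd \<tau> i = snd \<tau>' i"
  have "sp (snd \<tau>) D = sp (snd \<tau>') D" by (rule sp_cong) (rule a(2))
  then show ?thesis using a(1) by (simp add: flatOf_def)
qed

lemma lam_le_lamN: "A \<subseteq> F2n n \<Longrightarrow> lam n D S A \<le> lamN n D S"
  unfolding lamN_def by (rule Max_ge) auto

lemma lam_nonneg: "0 \<le> lam n D S A" by (simp add: lam_def)

lemma lamN_attained: "\<exists>A\<in>Pow (F2n n). lamN n D S = lam n D S A"
proof -
  have "lamN n D S \<in> (\<lambda>A. lam n D S A) ` Pow (F2n n)"
    unfolding lamN_def by (rule Max_in) auto
  then show ?thesis by blast
qed

lemma lam_mono: assumes "D \<le> n"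
  shows "lam (Suc n) D S A \<le> lamN n D S"
proof -
  let ?T1 = "Tup (Suc n) n" and ?T0 = "Tup n D" and ?T2 = "Tup (Suc n) D"
  let ?good = "\<lambda>\<tau>. card (flatOf D \<tau> \<inter> A) = S"
  let ?W = "{p\<in>?T1 \<times> ?T0. ?good (compo (fst p) (snd p))}"
  define F1 where "F1 = (\<Prod>i<n - D. (2::nat) ^ Suc n - 2 ^ (D + i))"
  let ?G2 = "card {\<tau>\<in>?T2. ?good \<tau>}"
  let ?L = "lamN n D S"
  have nD: "D + (n - D) = n" using assms by simp
  have F1pos: "F1 > 0" unfolding F1_def
  proof (intro prod_pos)
    fix i assume "i \<in> {..<n - D}"
    then have "D + i < Suc n" by auto
    then have "(2::nat) ^ (D + i) < 2 ^ Suc n" by (rule power_strict_increasing) simp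
    then show "0 < (2::nat) ^ Suc n - 2 ^ (D + i)" by simp
  qed
  have T0pos: "card ?T0 > 0" using card_Tup_pos assms by blast
  have T2pos: "card ?T2 > 0" using card_Tup_pos assms by simp
  have iter: "card {\<tau>\<in>?T1. P (flatOf D \<tau>)} = F1 * card {\<tau>\<in>?T2. P (flatOf D \<tau>)}" for P
    using card_prefix_iter[of "Suc n" D "n - D" P] nD by (simp add: F1_def)
  have cT1: "card ?T1 = F1 * card ?T2" using iter[of "\<lambda>_. True"] by simp
  have a: "real (card ?W) \<le> real (card ?T1) * (?L * real (card ?T0))"
  proof -
    have "card ?W = (\<Sum>\<sigma>\<in>?T1. card {\<mu>\<in>?T0. ?good (compo \<sigma> \<mu>)})"
      by (subst card_pairs2) simp_all
    then have "real (card ?W) = (\<Sum>\<sigma>\<in>?T1. real (card {\<mu>\<in>?T0. ?good (compo \<sigma> \<mu>)}))"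
      by (simp add: of_nat_sum)
    also have "\<dots> \<le> (\<Sum>\<sigma>\<in>?T1. ?L * real (card ?T0))"
    proof (rule sum_mono)
      fix \<sigma> assume s: "\<sigma> \<in> ?T1"
      define B where "B = {b\<in>F2n n. vadd (fst \<sigma>) (phi (snd \<sigma>) b) \<in> A}"
      have "{\<mu>\<in>?T0. ?good (compo \<sigma> \<mu>)} = {\<mu>\<in>?T0. card (flatOf D \<mu> \<inter> B) = S}"
        using comp_good[OF s, of _ D A] by (auto simp: B_def)
      then have "real (card {\<mu>\<in>?T0. ?good (compo \<sigma> \<mu>)}) = lam n D S B * real (card ?T0)"
        using lam_Tup[of n D S B] T0pos by simp
      also have "\<dots> \<le> ?L * real (card ?T0)"
        by (rule mult_right_mono[OF lam_le_lamN]) (auto simp: B_def)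
      finally show "real (card {\<mu>\<in>?T0. ?good (compo \<sigma> \<mu>)}) \<le> ?L * real (card ?T0)" .
    qed
    also have "\<dots> = real (card ?T1) * (?L * real (card ?T0))" by simp
    finally show ?thesis .
  qed
  have b: "card ?W = card ?T0 * (F1 * ?G2)"
  proof -
    have "card ?W = (\<Sum>\<mu>\<in>?T0. card {\<sigma>\<in>?T1. ?good (compo \<sigma> \<mu>)})"
      by (subst card_pairs) simp_all
    also have "\<dots> = (\<Sum>\<mu>\<in>?T0. F1 * ?G2)"
    proof (rule sum.cong[OF refl])
      fix \<mu> assume m: "\<mu> \<in> ?T0"
      obtain a M where aM: "\<mu> = (a, M)" "a \<in> F2n n" "M \<in> Ind (F2n n) D" using m by (cases \<mu>) (auto simp: Tup_def)
      have "2 ^ (D + (n - D)) \<le> card (F2n n)" using nD card_F2n by simp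
      then obtain M' where M': "M' \<in> Ind (F2n n) (D + (n - D))" "\<forall>i<D. M' i = M i"
        using ext_exists[OF subsp_F2n finite_F2n aM(3)] by blast
      have mt: "(a, M') \<in> Tup n n" using M' aM nD by (simp add: Tup_def)
      have eqg: "?good (compo \<sigma> \<mu>) = ?good (compo \<sigma> (a, M'))" for \<sigma>
      proof -
        have "flatOf D (compo \<sigma> \<mu>) = flatOf D (compo \<sigma> (a, M'))"
          by (rule flatOf_cong) (use aM M' in \<open>simp_all add: compo_def\<close>)
        then show ?thesis by simp
      qed
      let ?psi = "\<lambda>\<sigma>. compo \<sigma> (a, M')"
      have inj: "inj_on ?psi ?T1" by (rule compo_inj_sigma[OF mt])
      have into: "?psi ` ?T1 \<subseteq> ?T1"
      proof
        fix \<tau> assume "\<tau> \<in> ?psi ` ?T1"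
        then obtain \<sigma> where "\<sigma> \<in> ?T1" "\<tau> = ?psi \<sigma>" by blast
        then show "\<tau> \<in> ?T1" using comp_Tup[OF _ mt] by simp
      qed
      have onto: "?psi ` ?T1 = ?T1" by (rule endo_inj_surj[OF finite_Tup into inj])
      have "{\<sigma>\<in>?T1. ?good (compo \<sigma> \<mu>)} = {\<sigma>\<in>?T1. ?good (?psi \<sigma>)}" using eqg by simp
      then have "card {\<sigma>\<in>?T1. ?good (compo \<sigma> \<mu>)} = card (?psi ` {\<sigma>\<in>?T1. ?good (?psi \<sigma>)})"
        using card_image[OF inj_on_subset[OF inj]] by simp
      also have "?psi ` {\<sigma>\<in>?T1. ?good (?psi \<sigma>)} = {\<tau>\<in>?psi ` ?T1. ?good \<tau>}" by blast
      also have "\<dots> = {\<tau>\<in>?T1. ?good \<tau>}" unfolding onto ..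
      also have "card {\<tau>\<in>?T1. ?good \<tau>} = F1 * ?G2" using iter[of "\<lambda>F. card (F \<inter> A) = S"] by simp
      finally show "card {\<sigma>\<in>?T1. ?good (compo \<sigma> \<mu>)} = F1 * ?G2" .
    qed
    finally show ?thesis by simp
  qed
  have "real (card ?T0) * (real F1 * real ?G2) \<le> real (card ?T0) * (real F1 * (?L * real (card ?T2)))"
    using a b cT1 by (simp add: algebra_simps)
  then have "real F1 * real ?G2 \<le> real F1 * (?L * real (card ?T2))"
    using T0pos by (simp add: mult_le_cancel_left_pos)
  then have "real ?G2 \<le> ?L * real (card ?T2)" using F1pos by (simp add: mult_le_cancel_left_pos)
  then show ?thesis unfolding lam_Tup using T2pos by (simp add: divide_le_eq)
qed

lemma lamN_mono: "D \<le> n \<Longrightarrow> lamN (Suc n) D S \<le> lamN n D S"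
proof -
  assume D: "D \<le> n"
  show ?thesis unfolding lamN_def[of "Suc n"]
  proof (rule Max.boundedI)
    show "finite ((\<lambda>A. lam (Suc n) D S A) ` Pow (F2n (Suc n)))" by simp
    have "{} \<in> Pow (F2n (Suc n))" by simp
    then show "(\<lambda>A. lam (Suc n) D S A) ` Pow (F2n (Suc n)) \<noteq> {}" by blast
    fix a assume "a \<in> (\<lambda>A. lam (Suc n) D S A) ` Pow (F2n (Suc n))"
    then obtain A where "a = lam (Suc n) D S A" by blast
    then show "a \<le> lamN n D S" using lam_mono[OF D] by simp
  qed
qed

lemma lamN_nonneg: "0 \<le> lamN n D S"
  using lam_le_lamN[of "{}" n D S] lam_nonneg[of n D S "{}"] by simp

lemma lamN_convergent: "convergent (\<lambda>n. lamN n D S)"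
proof -
  let ?X = "\<lambda>n. lamN (n + D) D S"
  have dec: "decseq ?X"
    by (rule decseq_SucI) (simp add: lamN_mono)
  have "Bseq ?X"
  proof (rule BseqI'[where K="lamN D D S"])
    fix n
    have "?X n \<le> ?X 0" using dec[unfolded decseq_def, rule_format, of 0 n] by simp
    then show "norm (?X n) \<le> lamN D D S" using lamN_nonneg[of "n + D" D S] by simp
  qed
  then have "convergent ?X" using dec by (simp add: Bseq_monoseq_convergent monoseq_iff)
  then show ?thesis using convergent_ignore_initial_segment[of "\<lambda>n. lamN n D S" D] by simp
qed

lemma aux_lin: "(x::real) \<le> y \<Longrightarrow> 2 * (x - 1) \<le> 2 * y - 1" by (simp add: algebra_simps)

theorem mainTheorem10:
  fixes d s j k t :: nat
  assumes "d \<ge> 1" and "1 < s" and "s < 2 ^ d"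
    and "s = j * 2 ^ k" and "odd j"
  defines "c \<equiv> \<lambda>t::nat. 1/2 - ((2::real) ^ (d - k) - 1) / ((2::real) ^ (d + t + 1) - 1)"
  shows "lamstar (d + t) (2 ^ t * s) \<le> 1/2 + c t * lamstar (d + t + 1) (2 ^ (t + 1) * s)
    \<and> (\<forall>n A. n \<ge> d + t + 1 \<longrightarrow> A \<subseteq> F2n n \<longrightarrow>
          lam n (d + t) (2 ^ t * s) A \<le> 1/2 + c t * lam n (d + t + 1) (2 ^ (t + 1) * s) A)"
proof -
  define D where "D = d + t"
  define K where "K = k + t"
  define S1 where "S1 = 2 ^ t * s"
  define S2 where "S2 = 2 ^ (t + 1) * s"
  have SK: "S1 = j * 2 ^ K" using assms(4) by (simp add: S1_def K_def power_add)
  have S2e: "2 * S1 = S2" by (simp add: S1_def S2_def)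
  have ND: "d + t + 1 = Suc D" by (simp add: D_def)
  have mk: "Suc D - (K + 1) = d - k" by (simp add: D_def K_def)
  have mk2: "D - K = d - k" by (simp add: D_def K_def)
  define P where "P = (2::real) ^ Suc D"
  define Q where "Q = (2::real) ^ (d - k)"
  have "(1::real) \<le> 2 ^ D" by simp
  moreover have "P = 2 * 2 ^ D" by (simp add: P_def)
  ultimately have P1: "P - 1 > 0" by linarith
  have ceq: "c t = (P - Q) / (P - 1) - 1/2"
  proof -
    have "c t = 1/2 - (Q - 1) / (P - 1)" by (simp add: c_def P_def Q_def D_def)
    moreover have "(P - Q) / (P - 1) = 1 - (Q - 1) / (P - 1)" using P1 by (simp add: field_simps)
    ultimately show ?thesis by simp
  qed
  have rho: "((2::real) ^ Suc D - 2 ^ (Suc D - (K + 1))) / (2 ^ Suc D - 1) = (P - Q) / (P - 1)"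
    by (simp add: mk mk2 P_def Q_def)
  have cnn: "0 \<le> c t"
  proof -
    have "(2::real) ^ (d - k) \<le> 2 ^ D" by (intro power_increasing) (auto simp: D_def)
    then have "2 * ((2::real) ^ (d - k) - 1) \<le> 2 * 2 ^ D - 1" by (rule aux_lin)
    then have "2 * (Q - 1) \<le> P - 1" by (simp add: P_def Q_def)
    then have "(Q - 1) / (P - 1) \<le> 1/2" using P1 by (simp add: divide_le_eq)
    moreover have "c t = 1/2 - (Q - 1) / (P - 1)" by (simp add: c_def P_def Q_def D_def)
    ultimately show ?thesis by simp
  qed
  have part2: "lam n D S1 A \<le> 1/2 + c t * lam n (Suc D) S2 A" if n: "n \<ge> Suc D" for n A
    using main_ineq[OF n SK assms(5), of A] unfolding rho ceq[symmetric] S2e .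
  have part1: "lamN n D S1 \<le> 1/2 + c t * lamN n (Suc D) S2" if n: "n \<ge> Suc D" for n
  proof -
    obtain A where A: "A \<in> Pow (F2n n)" "lamN n D S1 = lam n D S1 A" using lamN_attained by blast
    have "lam n (Suc D) S2 A \<le> lamN n (Suc D) S2" using A(1) lam_le_lamN by simp
    then have "c t * lam n (Suc D) S2 A \<le> c t * lamN n (Suc D) S2" using cnn by (rule mult_left_mono)
    then show ?thesis using part2[OF n, of A] A(2) by simp
  qed
  have L1: "(\<lambda>n. lamN n D S1) \<longlonglongrightarrow> lamstar D S1"
    unfolding lamstar_def using lamN_convergent convergent_LIMSEQ_iff by blast
  have L2: "(\<lambda>n. lamN n (Suc D) S2) \<longlonglongrightarrow> lamstar (Suc D) S2"
    unfolding lamstar_def using lamN_convergent convergent_LIMSEQ_iff by blast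
  have L2': "(\<lambda>n. 1/2 + c t * lamN n (Suc D) S2) \<longlonglongrightarrow> 1/2 + c t * lamstar (Suc D) S2"
    by (intro tendsto_intros L2)
  have "lamstar D S1 \<le> 1/2 + c t * lamstar (Suc D) S2"
    by (rule LIMSEQ_le[OF L1 L2']) (use part1 in blast)
  then show ?thesis using part2 unfolding D_def S1_def S2_def ND[symmetric] by auto
qed


end
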